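(* Let $\mathcal{X}$ be a compact Polish space, $\mathcal{L}:\mathcal{X}\to[-\infty,\infty)$ upper semicontinuous, $P\in\mathcal{P}(\mathcal{X})$, $D$ a pre-divergence such that $Q\mapsto D(Q\|P)$ is lower semicontinuous, and $c$ a cost function with $c(x_1,x_2)=0$ if and only if $x_1=x_2$. For $r>0$ let $c_r=rc$. Then for every $\epsilon>0$, \[\lim_{r\to\infty}\sup_{Q:D^{c_r}(Q\|P)\leq \epsilon}E_Q[\mathcal{L}]=\sup_{Q:D(Q\|P)\leq\epsilon}E_Q[\mathcal{L}].\] Moreover, if $\{\mathcal{L}_\theta\}_{\theta\in\Theta}$ is a family of upper semicontinuous functions $\mathcal{X}\to[-\infty,\infty)$, then \[\lim_{r\to\infty}\inf_{\theta\in\Theta}\sup_{Q:D^{c_r}(Q\|P)\leq \epsilon}E_Q[\mathcal{L}_\theta]=\inf_{\theta\in\Theta}\sup_{Q:D(Q\|P)\leq\epsilon}E_Q[\mathcal{L}_\theta].\]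
   Context: $\mathcal{P}(\mathcal{X})$ is the set of Borel probability measures on $\mathcal{X}$ with the weak topology; suprema are over $Q\in\mathcal{P}(\mathcal{X})$. A pre-divergence is $D:\mathcal{P}(\mathcal{X})\times\mathcal{P}(\mathcal{X})\to[0,\infty]$ with $D(\mu\|\mu)=0$ for all $\mu$. A cost function is a lower semicontinuous $c:\mathcal{X}\times\mathcal{X}\to[0,\infty]$; for a cost function $c'$ its OT cost is $C'(\mu,\nu)=\inf\{\int c'\,d\pi:\pi_1=\mu,\pi_2=\nu\}$ and $D^{c'}(\nu\|\mu)=\inf_{\eta\in\mathcal{P}(\mathcal{X})}\{D(\eta\|\mu)+C'(\eta,\nu)\}$. *)

theory Defs
  imports "HOL-Probability.Probability"
begin

definition Prob :: "'a::topological_space measure set" where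
  "Prob = {M. prob_space M \<and> sets M = sets borel}"

definition usc :: "('a::topological_space \<Rightarrow> 'b::linorder_topology) \<Rightarrow> bool" where
  "usc f \<longleftrightarrow> (\<forall>t. open {x. f x < t})"

definition lsc :: "('a::topological_space \<Rightarrow> 'b::linorder_topology) \<Rightarrow> bool" where
  "lsc f \<longleftrightarrow> (\<forall>t. open {x. t < f x})"

definition weak_topology :: "'a::topological_space measure topology" where
  "weak_topology = topology_generated_by
     {{Q \<in> Prob. (\<integral>x. f x \<partial>Q) \<in> U} | (f :: 'a \<Rightarrow> real) U.
        continuous_on UNIV f \<and> bounded (range f) \<and> open U}"

definition weak_lsc :: "('a::topological_space measure \<Rightarrow> ennreal) \<Rightarrow> bool" where
  "weak_lsc F \<longleftrightarrow> (\<forall>t. openin weak_topology {Q \<in> Prob. t < F Q})"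

definition pre_divergence :: "('a::topological_space measure \<Rightarrow> 'a measure \<Rightarrow> ennreal) \<Rightarrow> bool" where
  "pre_divergence D \<longleftrightarrow> (\<forall>\<mu>\<in>Prob. D \<mu> \<mu> = 0)"

definition cost_function :: "('a::topological_space \<times> 'a \<Rightarrow> ennreal) \<Rightarrow> bool" where
  "cost_function c \<longleftrightarrow> lsc c"

definition couplings :: "'a::topological_space measure \<Rightarrow> 'a measure \<Rightarrow> ('a \<times> 'a) measure set" where
  "couplings \<mu> \<nu> = {\<pi> \<in> Prob. distr \<pi> borel fst = \<mu> \<and> distr \<pi> borel snd = \<nu>}"

definition OT_cost :: "('a::topological_space \<times> 'a \<Rightarrow> ennreal) \<Rightarrow> 'a measure \<Rightarrow> 'a measure \<Rightarrow> ennreal" where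
  "OT_cost c \<mu> \<nu> = (INF \<pi>\<in>couplings \<mu> \<nu>. \<integral>\<^sup>+ z. c z \<partial>\<pi>)"

definition OT_reg_div ::
  "('a::topological_space measure \<Rightarrow> 'a measure \<Rightarrow> ennreal) \<Rightarrow> ('a \<times> 'a \<Rightarrow> ennreal)
     \<Rightarrow> 'a measure \<Rightarrow> 'a measure \<Rightarrow> ennreal" where
  "OT_reg_div D c \<nu> \<mu> = (INF \<eta>\<in>Prob. D \<eta> \<mu> + OT_cost c \<eta> \<nu>)"

text \<open>E_Q[L] = E_Q[L^+] - E_Q[L^-] (for L bounded above this is well defined in [-\<infinity>,\<infinity>)).\<close>

definition expect :: "'a measure \<Rightarrow> ('a \<Rightarrow> ereal) \<Rightarrow> ereal" where
  "expect Q L = enn2ereal (\<integral>\<^sup>+ x. e2ennreal (L x) \<partial>Q) - enn2ereal (\<integral>\<^sup>+ x. e2ennreal (- L x) \<partial>Q)"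

end

theory Submission
  imports Defs
begin

lemma e2ennreal_split:
  fixes M :: real and z :: ereal
  assumes "z \<le> ereal M" "0 \<le> M"
  shows "e2ennreal (ereal M - z) + e2ennreal z = ennreal M + e2ennreal (- z)"
proof (cases z)
  case (real r)
  show ?thesis
  proof (cases "r \<ge> 0")
    case True
    then show ?thesis using real assms
      by (simp add: e2ennreal_ereal ennreal_plus[symmetric] ennreal_neg)
  next
    case False
    then show ?thesis using real assms
      by (simp add: e2ennreal_ereal ennreal_plus[symmetric] ennreal_neg)
  qed
next
  case PInf
  then show ?thesis using assms by simp
next
  case MInf
  then show ?thesis using assms by simp
qed

lemma ennreal_eq_aux: fixes A B C :: ennreal assumes eq: "A + B = ennreal M + C" and b: "B = ennreal b" "0 \<le> b" "b \<le> M"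
  shows "enn2ereal B - enn2ereal C = ereal M - enn2ereal A"
  proof (cases "C = \<infinity>")
    case True
    then have "A + B = \<infinity>" using eq by simp
    then have "A = \<infinity>" using b by (simp add: ennreal_add_eq_top)
    then show ?thesis using True b by simp
  next
    case False
    then obtain c where c: "C = ennreal c" "0 \<le> c" by (cases C rule: ennreal_cases) auto
    then have "A + B \<noteq> \<infinity>" using eq c by (simp add: ennreal_add_eq_top)
    then have "A \<noteq> \<infinity>" by (simp add: ennreal_add_eq_top)
    then obtain a where a: "A = ennreal a" "0 \<le> a" by (cases A rule: ennreal_cases) auto
    have "ennreal (a + b) = ennreal (M + c)" using eq a b c ennreal_plus by (metis order.trans)
    then have "a + b = M + c" using a b c by (subst (asm) ennreal_inj) auto
    then show ?thesis using a b c by (simp add: enn2ereal_ennreal)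
  qed

lemma expect_alt:
  assumes "prob_space Q" and [measurable]: "f \<in> borel_measurable Q"
    and le: "\<And>x. f x \<le> ereal M" and "0 \<le> M"
  shows "expect Q f = ereal M - enn2ereal (\<integral>\<^sup>+ x. e2ennreal (ereal M - f x) \<partial>Q)"
proof -
  interpret prob_space Q by fact
  define A where "A = (\<integral>\<^sup>+ x. e2ennreal (ereal M - f x) \<partial>Q)"
  define B where "B = (\<integral>\<^sup>+ x. e2ennreal (f x) \<partial>Q)"
  define C where "C = (\<integral>\<^sup>+ x. e2ennreal (- f x) \<partial>Q)"
  have "A + B = (\<integral>\<^sup>+ x. e2ennreal (ereal M - f x) + e2ennreal (f x) \<partial>Q)"
    unfolding A_def B_def by (rule nn_integral_add[symmetric]) auto
  also have "\<dots> = (\<integral>\<^sup>+ x. ennreal M + e2ennreal (- f x) \<partial>Q)"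
    using e2ennreal_split[OF le \<open>0 \<le> M\<close>] by simp
  also have "\<dots> = ennreal M + C"
    unfolding C_def by (subst nn_integral_add) (auto simp: emeasure_space_1)
  finally have eq: "A + B = ennreal M + C" .
  have pt: "e2ennreal (f x) \<le> ennreal M" for x
    using e2ennreal_mono[OF le[of x]] by (simp add: e2ennreal_ereal)
  have "B \<le> (\<integral>\<^sup>+ x. ennreal M \<partial>Q)"
    unfolding B_def by (rule nn_integral_mono) (rule pt)
  then have Ble: "B \<le> ennreal M" by (simp add: emeasure_space_1)
  then have "B < \<infinity>" by (simp add: le_less_trans)
  then have "B \<noteq> \<infinity>" by simp
  then obtain b where b0: "B = ennreal b" "0 \<le> b" by (cases B rule: ennreal_cases) auto
  with Ble \<open>0 \<le> M\<close> have b: "B = ennreal b" "0 \<le> b" "b \<le> M" by auto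
  have "expect Q f = enn2ereal B - enn2ereal C" unfolding expect_def B_def C_def ..
  also have "\<dots> = ereal M - enn2ereal A" by (rule ennreal_eq_aux[OF eq b])
  finally show ?thesis unfolding A_def .
qed


lemma expect_real:
  assumes "prob_space Q" and [measurable]: "g \<in> borel_measurable Q"
    and bnd: "\<And>x. \<bar>g x\<bar> \<le> K"
  shows "expect Q (\<lambda>x. ereal (g x)) = ereal (\<integral>x. g x \<partial>Q)"
proof -
  interpret prob_space Q by fact
  have K0: "0 \<le> K" using bnd[of undefined] by linarith
  have int: "integrable Q g"
    by (rule integrable_const_bound[where B=K]) (use bnd in auto)
  have "expect Q (\<lambda>x. ereal (g x)) = ereal K - enn2ereal (\<integral>\<^sup>+ x. e2ennreal (ereal K - ereal (g x)) \<partial>Q)"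
    by (rule expect_alt) (use \<open>prob_space Q\<close> bnd K0 in \<open>auto simp: abs_le_iff\<close>)
  also have "(\<integral>\<^sup>+ x. e2ennreal (ereal K - ereal (g x)) \<partial>Q) = (\<integral>\<^sup>+ x. ennreal (K - g x) \<partial>Q)"
    by simp
  also have "\<dots> = ennreal (\<integral>x. K - g x \<partial>Q)"
    by (rule nn_integral_eq_integral) (use int bnd in \<open>auto simp: abs_le_iff\<close>)
  also have "(\<integral>x. K - g x \<partial>Q) = K - (\<integral>x. g x \<partial>Q)"
    using int by (simp add: prob_space)
  also have "K - (\<integral>x. g x \<partial>Q) \<ge> 0"
  proof -
    have "(\<integral>x. g x \<partial>Q) \<le> (\<integral>x. K \<partial>Q)"
      by (rule integral_mono) (use int bnd in \<open>auto simp: abs_le_iff\<close>)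
    then show ?thesis by (simp add: prob_space)
  qed
  then have "enn2ereal (ennreal (K - (\<integral>x. g x \<partial>Q))) = ereal (K - (\<integral>x. g x \<partial>Q))"
    by (simp add: enn2ereal_ennreal)
  finally show ?thesis by simp
qed

lemma expect_mono:
  assumes "prob_space Q" and [measurable]: "f \<in> borel_measurable Q" "g \<in> borel_measurable Q"
    and fg: "\<And>x. f x \<le> g x" and le: "\<And>x. g x \<le> ereal M" and "0 \<le> M"
  shows "expect Q f \<le> expect Q g"
proof -
  have lef: "\<And>x. f x \<le> ereal M" using fg le order_trans by blast
  have "(\<integral>\<^sup>+ x. e2ennreal (ereal M - g x) \<partial>Q) \<le> (\<integral>\<^sup>+ x. e2ennreal (ereal M - f x) \<partial>Q)"
    by (intro nn_integral_mono e2ennreal_mono ereal_minus_mono fg order.refl)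
  then have "ereal M - enn2ereal (\<integral>\<^sup>+ x. e2ennreal (ereal M - f x) \<partial>Q)
      \<le> ereal M - enn2ereal (\<integral>\<^sup>+ x. e2ennreal (ereal M - g x) \<partial>Q)"
    by (intro ereal_minus_mono order.refl) (simp add: less_eq_ennreal.rep_eq)
  then show ?thesis
    using expect_alt[OF assms(1,2) lef \<open>0 \<le> M\<close>] expect_alt[OF assms(1,3) le \<open>0 \<le> M\<close>] by simp
qed

lemma expect_dec_lim:
  assumes "prob_space Q" and [measurable]: "\<And>j. g j \<in> borel_measurable Q" "f \<in> borel_measurable Q"
    and le: "\<And>j x. g j x \<le> ereal M" and "0 \<le> M"
    and dec: "\<And>j x. g (Suc j) x \<le> g j x"
    and lim: "\<And>x. f x = (INF j. g j x)"
    and y: "\<And>j. y \<le> expect Q (g j)"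
  shows "y \<le> expect Q f"
proof -
  have fle: "f x \<le> ereal M" for x
    unfolding lim by (rule INF_lower2[of 0]) (auto simp: le)
  define h where "h j x = e2ennreal (ereal M - g j x)" for j x
  have anti: "g j' x \<le> g j x" if "j \<le> j'" for j j' x
    using lift_Suc_antimono_le[of "\<lambda>j. g j x", OF dec that] by simp
  have monoh: "mono (\<lambda>j. ereal M - g j x)" for x
    by (intro monoI ereal_minus_mono order.refl anti)
  have "(SUP j. ereal M - g j x) = ereal M - (INF j. g j x)" for x
    by (rule SUP_ereal_minus_right) auto
  then have hsup: "(SUP j. h j x) = e2ennreal (ereal M - f x)" for x
    unfolding h_def lim
    using sup_continuousD[OF sup_continuous_e2ennreal[OF sup_continuous_id] monoh[of x]] by simp
  have inch: "incseq h"
    unfolding h_def incseq_def le_fun_def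
    by (metis e2ennreal_mono monoD monoh)
  have meas: "\<And>j. h j \<in> borel_measurable Q" unfolding h_def by measurable
  define A where "A j = (\<integral>\<^sup>+ x. h j x \<partial>Q)" for j
  have "(\<integral>\<^sup>+ x. e2ennreal (ereal M - f x) \<partial>Q) = (SUP j. A j)"
    unfolding A_def hsup[symmetric]
    by (rule nn_integral_monotone_convergence_SUP[OF inch meas])
  moreover have monoA: "mono A"
    unfolding A_def mono_def
    by (intro allI impI nn_integral_mono) (use inch in \<open>auto simp: incseq_def le_fun_def\<close>)
  ultimately have "enn2ereal (\<integral>\<^sup>+ x. e2ennreal (ereal M - f x) \<partial>Q) = (SUP j. enn2ereal (A j))"
    using sup_continuousD[OF sup_continuous_enn2ereal[OF sup_continuous_id] monoA] by simp
  then have "expect Q f = ereal M - (SUP j. enn2ereal (A j))"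
    using expect_alt[OF assms(1,3) fle \<open>0 \<le> M\<close>] by simp
  also have "\<dots> = (INF j. ereal M - enn2ereal (A j))"
    by (rule INF_ereal_minus_right[symmetric]) auto
  finally have e: "expect Q f = (INF j. ereal M - enn2ereal (A j))" .
  have "y \<le> ereal M - enn2ereal (A j)" for j
    using y[of j] expect_alt[OF assms(1) assms(2)[of j] le \<open>0 \<le> M\<close>] unfolding A_def h_def by simp
  then show ?thesis unfolding e by (rule INF_greatest)
qed

lemma weak_open_conv:
  fixes Q :: "'a::topological_space measure"
  assumes "openin weak_topology U" "Q \<in> U"
    and conv: "\<And>f::'a\<Rightarrow>real. continuous_on UNIV f \<Longrightarrow> bounded (range f) \<Longrightarrow>
              (\<lambda>k. \<integral>x. f x \<partial>(Qs k)) \<longlonglongrightarrow> (\<integral>x. f x \<partial>Q)"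
    and Qs: "\<And>k. Qs k \<in> Prob"
  shows "eventually (\<lambda>k. Qs k \<in> U) sequentially"
proof -
  have "generate_topology_on {{Q \<in> Prob. (\<integral>x. f x \<partial>Q) \<in> U} | (f :: 'a \<Rightarrow> real) U.
        continuous_on UNIV f \<and> bounded (range f) \<and> open U} U"
    using assms(1) unfolding weak_topology_def openin_topology_generated_by_iff .
  then show ?thesis using assms(2)
  proof (induction)
    case Empty
    then show ?case by simp
  next
    case (Int a b)
    then show ?case by (auto intro: eventually_conj elim: eventually_mono)
  next
    case (UN K)
    then obtain k where "k \<in> K" "Q \<in> k" by auto
    with UN.IH[of k] show ?case by (auto elim: eventually_mono)
  next
    case (Basis s)
    then obtain f and V :: "real set" where s: "s = {Q \<in> Prob. (\<integral>x. f x \<partial>Q) \<in> V}" "continuous_on UNIV f"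
       "bounded (range f)" "open V" by auto
    with Basis.prems have "(\<integral>x. f x \<partial>Q) \<in> V" by auto
    from topological_tendstoD[OF conv[OF s(2,3)] s(4) this]
    show ?case using Qs s(1) by (auto elim: eventually_mono)
  qed
qed

lemma Prob_prob: "Q \<in> Prob \<Longrightarrow> prob_space Q"
  by (simp add: Prob_def)

lemma Prob_meas: "Q \<in> Prob \<Longrightarrow> f \<in> borel_measurable borel \<Longrightarrow> f \<in> borel_measurable Q"
  unfolding Prob_def using measurable_cong_sets[of Q borel borel borel] by auto

lemma usc_measurable:
  fixes L :: "'a::topological_space \<Rightarrow> ereal"
  assumes "usc L" shows "L \<in> borel_measurable borel"
  by (rule borel_measurableI_less) (use assms in \<open>auto simp: usc_def\<close>)

lemma usc_bounded:
  fixes L :: "'a::topological_space \<Rightarrow> ereal"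
  assumes cpt: "compact (UNIV :: 'a set)" and "usc L" and fin: "\<forall>x. L x \<noteq> \<infinity>"
  obtains M where "0 \<le> M" "\<And>x. L x \<le> ereal M"
proof -
  have "UNIV \<subseteq> (\<Union>n\<in>UNIV. {x. L x < ereal (real (n::nat))})"
  proof
    fix x :: 'a
    obtain n :: nat where "L x < ereal (real n)" using fin less_PInf_Ex_of_nat by metis
    then show "x \<in> (\<Union>n\<in>UNIV. {x. L x < ereal (real (n::nat))})" by blast
  qed
  moreover have "\<And>n. open {x. L x < ereal (real (n::nat))}"
    using \<open>usc L\<close> unfolding usc_def by simp
  ultimately obtain C where C: "finite C" "UNIV \<subseteq> (\<Union>n\<in>C. {x. L x < ereal (real (n::nat))})"
    using compactE_image[OF cpt, of UNIV "\<lambda>n. {x. L x < ereal (real (n::nat))}"] by metis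
  define M where "M = real (Max (insert 0 C))"
  have "L x \<le> ereal M" for x
  proof -
    obtain n where "n \<in> C" "L x < ereal (real n)" using C by blast
    moreover have "n \<le> Max (insert 0 C)" using C(1) \<open>n \<in> C\<close> by simp
    ultimately show ?thesis unfolding M_def by (metis less_imp_le of_nat_le_iff order_trans ereal_less_eq(3))
  qed
  then show ?thesis using that[of M] unfolding M_def by simp
qed


lemma expect_usc:
  fixes L :: "'a::metric_space \<Rightarrow> ereal"
  assumes cpt: "compact (UNIV::'a set)" and usc: "usc L" and fin: "\<forall>x. L x \<noteq> \<infinity>"
    and Q: "Q \<in> Prob" and Qs: "\<And>k. Qs k \<in> Prob"
    and conv: "\<And>f::'a\<Rightarrow>real. continuous_on UNIV f \<Longrightarrow> (\<lambda>k. \<integral>x. f x \<partial>Qs k) \<longlonglongrightarrow> (\<integral>x. f x \<partial>Q)"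
    and y: "\<And>k. y \<le> expect (Qs k) L"
  shows "y \<le> expect Q L"
proof -
  obtain M where M0: "0 \<le> M" and Mb: "\<And>x. L x \<le> ereal M"
    using usc_bounded[OF cpt usc fin] by blast
  have Lmeas: "L \<in> borel_measurable borel" by (rule usc_measurable[OF usc])
  define Lj where "Lj j y = real_of_ereal (max (L y) (ereal (- real j)))" for j :: nat and y
  have Lj_e: "ereal (Lj j y) = max (L y) (ereal (- real j))" for j y
  proof -
    have "max (L y) (ereal (- real j)) \<noteq> \<infinity>" using Mb[of y] by (auto simp: max_def)
    moreover have "max (L y) (ereal (- real j)) \<noteq> -\<infinity>" by (auto simp: max_def)
    ultimately show ?thesis unfolding Lj_def by (cases "max (L y) (ereal (- real j))") auto
  qed
  have Lj_le: "Lj j y \<le> M" for j y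
  proof -
    have "ereal (Lj j y) \<le> ereal M" unfolding Lj_e using Mb[of y] M0 by auto
    then show ?thesis by simp
  qed
  have Lj_ge: "- real j \<le> Lj j y" for j y
  proof -
    have "ereal (- real j) \<le> ereal (Lj j y)" unfolding Lj_e by auto
    then show ?thesis by simp
  qed
  have Lj_dec: "Lj (Suc j) y \<le> Lj j y" for j y
  proof -
    have "ereal (- real (Suc j)) \<le> ereal (- real j)" by simp
    then have "ereal (Lj (Suc j) y) \<le> ereal (Lj j y)" unfolding Lj_e by (rule max.mono[OF order.refl])
    then show ?thesis by simp
  qed
  define g where "g j x = (SUP y. Lj j y - real j * dist x y)" for j x
  have bdd: "bdd_above (range (\<lambda>y. Lj j y - real j * dist x y))" for j x
    by (rule bdd_aboveI2[where M=M]) (use Lj_le in \<open>smt (verit) mult_nonneg_nonneg of_nat_0_le_iff zero_le_dist\<close>)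
  have g_ge: "Lj j x \<le> g j x" for j x
    unfolding g_def using cSUP_upper[OF UNIV_I bdd[of j x], of x] by simp
  have g_le: "g j x \<le> M" for j x
    unfolding g_def
  proof (rule cSUP_least)
    fix y
    have "0 \<le> real j * dist x y" by simp
    then show "Lj j y - real j * dist x y \<le> M" using Lj_le[of j y] by linarith
  qed simp
  have g_lip: "g j x \<le> g j x' + real j * dist x x'" for j x x'
  proof -
    have "Lj j y - real j * dist x y \<le> g j x' + real j * dist x x'" for y
    proof -
      have "dist x' y \<le> dist x' x + dist x y" by (rule dist_triangle)
      then have "real j * dist x' y \<le> real j * dist x x' + real j * dist x y"
        by (simp add: dist_commute distrib_left[symmetric] mult_left_mono)
      moreover have "Lj j y - real j * dist x' y \<le> g j x'"
        unfolding g_def using cSUP_upper[OF UNIV_I bdd[of j x'], of y] by simp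
      ultimately show ?thesis by linarith
    qed
    then show ?thesis unfolding g_def[of j x] by (rule cSUP_least[OF UNIV_not_empty])
  qed
  have g_cont: "continuous_on UNIV (g j)" for j
  proof (rule lipschitz_on_continuous_on)
    show "(real j)-lipschitz_on UNIV (g j)"
    proof (rule lipschitz_onI)
      fix x x' :: 'a
      show "dist (g j x) (g j x') \<le> real j * dist x x'"
        using g_lip[of j x x'] g_lip[of j x' x] by (simp add: dist_real_def dist_commute abs_le_iff)
    qed simp
  qed
  have g_meas: "g j \<in> borel_measurable borel" for j
    by (rule borel_measurable_continuous_onI[OF g_cont])
  have g_bnd: "\<bar>g j x\<bar> \<le> M + real j" for j x
    using g_le[of j x] g_ge[of j x] Lj_ge[of j x] M0 by auto
  have g_dec: "g (Suc j) x \<le> g j x" for j x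
    unfolding g_def[of "Suc j"]
  proof (rule cSUP_least[OF UNIV_not_empty])
    fix y
    have "Lj (Suc j) y - real (Suc j) * dist x y \<le> Lj j y - real j * dist x y"
    proof -
      have "Lj (Suc j) y - real (Suc j) * dist x y = Lj (Suc j) y - real j * dist x y - dist x y"
        by (simp add: algebra_simps)
      then show ?thesis using Lj_dec[of j y] zero_le_dist[of x y] by linarith
    qed
    also have "\<dots> \<le> g j x" unfolding g_def using cSUP_upper[OF UNIV_I bdd[of j x], of y] by simp
    finally show "Lj (Suc j) y - real (Suc j) * dist x y \<le> g j x" .
  qed
  have g_lim: "L x = (INF j. ereal (g j x))" for x
  proof (rule antisym)
    show "L x \<le> (INF j. ereal (g j x))"
    proof (rule INF_greatest)
      fix j
      have "L x \<le> ereal (Lj j x)" unfolding Lj_e by simp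
      also have "\<dots> \<le> ereal (g j x)" using g_ge by simp
      finally show "L x \<le> ereal (g j x)" .
    qed
  next
    show "(INF j. ereal (g j x)) \<le> L x"
    proof (rule ccontr)
      assume "\<not> (INF j. ereal (g j x)) \<le> L x"
      then have "L x < (INF j. ereal (g j x))" by simp
      from ereal_dense2[OF this] obtain t where t: "L x < ereal t" "ereal t < (INF j. ereal (g j x))"
        by blast
      have "open {y. L y < ereal t}" using usc unfolding usc_def by simp
      then have "\<exists>r>0. ball x r \<subseteq> {y. L y < ereal t}"
        using t(1) unfolding open_contains_ball by simp
      then obtain r where r: "0 < r" "ball x r \<subseteq> {y. L y < ereal t}"
        by blast
      obtain j :: nat where j: "real j \<ge> max (- t) ((M - t) / r)"
        using real_arch_simple[of "max (- t) ((M - t) / r)"] by blast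
      have "g j x \<le> t"
        unfolding g_def
      proof (rule cSUP_least[OF UNIV_not_empty])
        fix y
        show "Lj j y - real j * dist x y \<le> t"
        proof (cases "dist x y < r")
          case True
          then have "y \<in> ball x r" by simp
          then have "L y < ereal t" using r(2) by blast
          moreover have "ereal (- real j) \<le> ereal t" using j by simp
          ultimately have "ereal (Lj j y) \<le> ereal t" unfolding Lj_e by simp
          then have "Lj j y \<le> t" by simp
          moreover have "0 \<le> real j * dist x y" by simp
          ultimately show ?thesis by linarith
        next
          case False
          have "(M - t) / r \<le> real j" using j by simp
          then have "M - t \<le> real j * r" using r(1) by (simp add: divide_le_eq mult.commute)
          also have "\<dots> \<le> real j * dist x y" using False by (simp add: mult_left_mono)
          finally show ?thesis using Lj_le[of j y] by linarith
        qed
      qed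
      then have "(INF j. ereal (g j x)) \<le> ereal t" using INF_lower2[of j UNIV "\<lambda>j. ereal (g j x)" "ereal t"] by simp
      then show False using t(2) by simp
    qed
  qed
  have yj: "y \<le> expect Q (\<lambda>x. ereal (g j x))" for j
  proof -
    have "y \<le> ereal (\<integral>x. g j x \<partial>Qs k)" for k
    proof -
      have "y \<le> expect (Qs k) L" by (rule y)
      also have "\<dots> \<le> expect (Qs k) (\<lambda>x. ereal (g j x))"
      proof (rule expect_mono[where M="M"])
        show "prob_space (Qs k)" using Qs Prob_prob by blast
        show "L \<in> borel_measurable (Qs k)" using Prob_meas[OF Qs Lmeas] .
        show "(\<lambda>x. ereal (g j x)) \<in> borel_measurable (Qs k)" using Prob_meas[OF Qs g_meas] by measurable
        show "L x \<le> ereal (g j x)" for x unfolding g_lim[of x] by (rule INF_lower) simp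
        show "ereal (g j x) \<le> ereal M" for x using g_le by simp
      qed (rule M0)
      also have "\<dots> = ereal (\<integral>x. g j x \<partial>Qs k)"
        by (rule expect_real[OF Prob_prob[OF Qs] Prob_meas[OF Qs g_meas] g_bnd])
      finally show ?thesis .
    qed
    moreover have lim: "(\<lambda>k. ereal (\<integral>x. g j x \<partial>Qs k)) \<longlonglongrightarrow> ereal (\<integral>x. g j x \<partial>Q)"
      using conv[OF g_cont] by (rule tendsto_ereal)
    ultimately have "y \<le> ereal (\<integral>x. g j x \<partial>Q)"
      by (intro LIMSEQ_le_const[OF lim]) auto
    also have "\<dots> = expect Q (\<lambda>x. ereal (g j x))"
      by (rule expect_real[OF Prob_prob[OF Q] Prob_meas[OF Q g_meas] g_bnd, symmetric])
    finally show ?thesis .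
  qed
  show ?thesis
  proof (rule expect_dec_lim[where g="\<lambda>j x. ereal (g j x)" and M=M])
    show "prob_space Q" using Q Prob_prob by blast
    show "(\<lambda>x. ereal (g j x)) \<in> borel_measurable Q" for j using Prob_meas[OF Q g_meas] by measurable
    show "L \<in> borel_measurable Q" using Prob_meas[OF Q Lmeas] .
    show "ereal (g j x) \<le> ereal M" for j x using g_le by simp
    show "ereal (g (Suc j) x) \<le> ereal (g j x)" for j x using g_dec by simp
    show "L x = (INF j. ereal (g j x))" for x by (rule g_lim)
    show "y \<le> expect Q (\<lambda>x. ereal (g j x))" for j by (rule yj)
  qed (rule M0)
qed

lemma lsc_measurable:
  fixes c :: "'a::topological_space \<Rightarrow> ennreal"
  assumes "lsc c" shows "c \<in> borel_measurable borel"
  by (rule borel_measurableI_greater) (use assms in \<open>auto simp: lsc_def\<close>)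

lemma meas_sets_borel: "sets Q = sets borel \<Longrightarrow> f \<in> measurable borel N \<Longrightarrow> f \<in> measurable Q N"
  using measurable_cong_sets[of Q borel N N] by simp

lemma diag_coupling:
  fixes Q :: "'a::{second_countable_topology, topological_space} measure"
  assumes Q: "Q \<in> Prob"
  shows "distr Q borel (\<lambda>x. (x,x)) \<in> couplings Q Q"
proof -
  interpret prob_space Q using Q by (simp add: Prob_def)
  have sQ: "sets Q = sets borel" using Q by (simp add: Prob_def)
  have m: "(\<lambda>x. (x,x)) \<in> measurable Q borel"
  proof -
    have "continuous_on UNIV (\<lambda>x::'a. (x,x))" by (intro continuous_intros)
    then have "(\<lambda>x::'a. (x,x)) \<in> borel_measurable borel" by (rule borel_measurable_continuous_onI)
    then show ?thesis using meas_sets_borel[OF sQ] by blast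
  qed
  have mf: "fst \<in> measurable (borel :: ('a \<times> 'a) measure) borel"
    by (simp add: borel_measurable_continuous_onI continuous_on_fst continuous_on_id)
  have ms: "snd \<in> measurable (borel :: ('a \<times> 'a) measure) borel"
    by (simp add: borel_measurable_continuous_onI continuous_on_snd continuous_on_id)
  have "distr (distr Q borel (\<lambda>x. (x,x))) borel fst = distr Q borel (\<lambda>x. x)"
    using distr_distr[OF mf m] by (simp add: comp_def)
  also have "\<dots> = Q" by (rule distr_id2[OF sQ[symmetric]])
  finally have 1: "distr (distr Q borel (\<lambda>x. (x,x))) borel fst = Q" .
  have "distr (distr Q borel (\<lambda>x. (x,x))) borel snd = distr Q borel (\<lambda>x. x)"
    using distr_distr[OF ms m] by (simp add: comp_def)
  also have "\<dots> = Q" by (rule distr_id2[OF sQ[symmetric]])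
  finally have 2: "distr (distr Q borel (\<lambda>x. (x,x))) borel snd = Q" .
  have "prob_space (distr Q borel (\<lambda>x. (x,x)))" by (rule prob_space_distr[OF m])
  then show ?thesis using 1 2 unfolding couplings_def Prob_def by simp
qed

lemma OT_cost_diag:
  fixes Q :: "'a::{second_countable_topology, topological_space} measure"
  assumes Q: "Q \<in> Prob" and c0: "\<And>x. c (x,x) = 0" and cm: "c \<in> borel_measurable borel"
  shows "OT_cost c Q Q = 0"
proof -
  have sQ: "sets Q = sets borel" using Q by (simp add: Prob_def)
  have m: "(\<lambda>x. (x,x)) \<in> measurable Q borel"
  proof -
    have "continuous_on UNIV (\<lambda>x::'a. (x,x))" by (intro continuous_intros)
    then have "(\<lambda>x::'a. (x,x)) \<in> borel_measurable borel" by (rule borel_measurable_continuous_onI)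
    then show ?thesis using meas_sets_borel[OF sQ] by blast
  qed
  have "(\<integral>\<^sup>+ z. c z \<partial>distr Q borel (\<lambda>x. (x,x))) = (\<integral>\<^sup>+ x. c (x,x) \<partial>Q)"
    by (rule nn_integral_distr[OF m]) (use cm in simp)
  then have "(\<integral>\<^sup>+ z. c z \<partial>distr Q borel (\<lambda>x. (x,x))) = 0" by (simp add: c0)
  moreover have "OT_cost c Q Q \<le> (\<integral>\<^sup>+ z. c z \<partial>distr Q borel (\<lambda>x. (x,x)))"
    unfolding OT_cost_def by (rule INF_lower[OF diag_coupling[OF Q]])
  ultimately show ?thesis by simp
qed


lemma lsc_pos_bound:
  fixes c :: "'b::topological_space \<Rightarrow> ennreal"
  assumes S: "compact S" and "lsc c" and pos: "\<And>z. z \<in> S \<Longrightarrow> 0 < c z"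
  obtains m :: real where "0 < m" "\<And>z. z \<in> S \<Longrightarrow> ennreal m \<le> c z"
proof -
  have "S \<subseteq> (\<Union>n\<in>UNIV. {z. ennreal (inverse (real (Suc n))) < c z})"
  proof
    fix z assume "z \<in> S"
    then have cz: "0 < c z" by (rule pos)
    have "\<exists>n. ennreal (inverse (real (Suc n))) < c z"
    proof (cases "c z = \<infinity>")
      case True then show ?thesis by simp
    next
      case False
      then obtain r where r: "c z = ennreal r" "0 \<le> r" by (cases "c z" rule: ennreal_cases) auto
      then have "0 < r" using cz by simp
      then obtain n where "inverse (real (Suc n)) < r" using reals_Archimedean by blast
      then have "ennreal (inverse (real (Suc n))) < c z" using r \<open>0 < r\<close> ennreal_lessI by auto
      then show ?thesis by blast
    qed
    then show "z \<in> (\<Union>n\<in>UNIV. {z. ennreal (inverse (real (Suc n))) < c z})" by blast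
  qed
  moreover have "\<And>n. open {z. ennreal (inverse (real (Suc n))) < c z}"
    using \<open>lsc c\<close> unfolding lsc_def by simp
  ultimately obtain C where C: "finite C" "S \<subseteq> (\<Union>n\<in>C. {z. ennreal (inverse (real (Suc n))) < c z})"
    using compactE_image[OF S, of UNIV "\<lambda>n. {z. ennreal (inverse (real (Suc n))) < c z}"] by metis
  define N where "N = Max (insert 0 C)"
  have "ennreal (inverse (real (Suc N))) \<le> c z" if zS: "z \<in> S" for z
  proof -
    obtain n where n: "n \<in> C" "ennreal (inverse (real (Suc n))) < c z" using C zS by blast
    have "n \<le> N" unfolding N_def using C(1) n(1) by simp
    then have "inverse (real (Suc N)) \<le> inverse (real (Suc n))"
      by (simp add: le_imp_inverse_le)
    then have "ennreal (inverse (real (Suc N))) \<le> ennreal (inverse (real (Suc n)))"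
      by (rule ennreal_leI)
    then show ?thesis using n(2) by (rule order.trans[OF _ less_imp_le])
  qed
  then show ?thesis using that[of "inverse (real (Suc N))"] by simp
qed

lemma coupling_conv:
  fixes c :: "'a::polish_space \<times> 'a \<Rightarrow> ennreal" and f :: "'a \<Rightarrow> real"
  assumes cpt: "compact (UNIV :: 'a set)" and lsc: "lsc c" and c0: "\<And>x y. c (x,y) = 0 \<longleftrightarrow> x = y"
    and \<pi>: "\<And>k. \<pi> k \<in> couplings (\<eta> k) (Q k)"
    and b: "\<And>k. (\<integral>\<^sup>+ z. c z \<partial>\<pi> k) \<le> ennreal (b k)" and b0: "b \<longlonglongrightarrow> 0"
    and bpos: "\<And>k. 0 \<le> b k"
    and f: "continuous_on UNIV f"
  shows "(\<lambda>k. (\<integral>x. f x \<partial>\<eta> k) - (\<integral>x. f x \<partial>Q k)) \<longlonglongrightarrow> 0"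
proof -
  have "bounded (range f)" using compact_continuous_image[OF f cpt] compact_imp_bounded by blast
  then obtain B where B0: "0 < B" and B: "\<And>x. \<bar>f x\<bar> \<le> B" unfolding bounded_pos by auto
  have uc: "uniformly_continuous_on UNIV f" by (rule compact_uniformly_continuous[OF f cpt])
  have cm: "c \<in> borel_measurable borel" by (rule lsc_measurable[OF lsc])
  have fm: "f \<in> borel_measurable borel" by (rule borel_measurable_continuous_onI[OF f])
  have f1m: "(\<lambda>z. f (fst z)) \<in> borel_measurable borel"
    by (rule borel_measurable_continuous_onI) (intro continuous_intros continuous_on_compose2[OF f]; simp)
  have f2m: "(\<lambda>z. f (snd z)) \<in> borel_measurable borel"
    by (rule borel_measurable_continuous_onI) (intro continuous_intros continuous_on_compose2[OF f]; simp)
  show ?thesis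
  proof (rule LIMSEQ_I)
    fix e :: real assume e: "0 < e"
    obtain d where d: "0 < d" "\<And>x x'. dist x' x < d \<Longrightarrow> dist (f x') (f x) < e/2"
      using uc e unfolding uniformly_continuous_on_def by (metis UNIV_I half_gt_zero)
    define S where "S = {z::'a\<times>'a. d \<le> dist (fst z) (snd z)}"
    have "closed S" unfolding S_def
      by (rule closed_Collect_le) (intro continuous_intros)+
    then have "compact S"
      using compact_Int_closed[OF compact_Times[OF cpt cpt]] by simp
    moreover have "0 < c z" if "z \<in> S" for z
    proof -
      have "fst z \<noteq> snd z" using that d(1) unfolding S_def by auto
      then have "c (fst z, snd z) \<noteq> 0" using c0 by blast
      then show ?thesis by (simp add: zero_less_iff_neq_zero)
    qed
    ultimately obtain m where m: "0 < m" "\<And>z. z \<in> S \<Longrightarrow> ennreal m \<le> c z"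
      using lsc_pos_bound[OF _ lsc] by metis
    have Sm: "S \<in> sets borel" using \<open>closed S\<close> by simp
    have bound: "\<bar>(\<integral>x. f x \<partial>\<eta> k) - (\<integral>x. f x \<partial>Q k)\<bar> \<le> e/2 + 2*B*(b k / m)" for k
    proof -
      have Pk: "\<pi> k \<in> Prob" and e1: "distr (\<pi> k) borel fst = \<eta> k" and e2: "distr (\<pi> k) borel snd = Q k"
        using \<pi>[of k] unfolding couplings_def by auto
      interpret prob_space "\<pi> k" using Pk by (simp add: Prob_def)
      have sk: "sets (\<pi> k) = sets borel" using Pk by (simp add: Prob_def)
      have "continuous_on UNIV (fst :: 'a\<times>'a \<Rightarrow> 'a)" by (intro continuous_intros)
      then have mfst: "fst \<in> measurable (\<pi> k) borel"
        using meas_sets_borel[OF sk] borel_measurable_continuous_onI by blast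
      have "continuous_on UNIV (snd :: 'a\<times>'a \<Rightarrow> 'a)" by (intro continuous_intros)
      then have msnd: "snd \<in> measurable (\<pi> k) borel"
        using meas_sets_borel[OF sk] borel_measurable_continuous_onI by blast
      have I1: "(\<integral>x. f x \<partial>\<eta> k) = (\<integral>z. f (fst z) \<partial>\<pi> k)"
        unfolding e1[symmetric] by (rule integral_distr[OF mfst fm])
      have I2: "(\<integral>x. f x \<partial>Q k) = (\<integral>z. f (snd z) \<partial>\<pi> k)"
        unfolding e2[symmetric] by (rule integral_distr[OF msnd fm])
      have f1k: "(\<lambda>z. f (fst z)) \<in> borel_measurable (\<pi> k)" using meas_sets_borel[OF sk f1m] .
      have f2k: "(\<lambda>z. f (snd z)) \<in> borel_measurable (\<pi> k)" using meas_sets_borel[OF sk f2m] .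
      have int1: "integrable (\<pi> k) (\<lambda>z. f (fst z))"
        by (rule integrable_const_bound[where B=B]) (use B f1k in auto)
      have int2: "integrable (\<pi> k) (\<lambda>z. f (snd z))"
        by (rule integrable_const_bound[where B=B]) (use B f2k in auto)
      have Sk: "S \<in> sets (\<pi> k)" using Sm sk by simp
      define g where "g z = e/2 + 2*B * indicator S z" for z
      have gm: "g \<in> borel_measurable (\<pi> k)" unfolding g_def using Sk by measurable
      have intg: "integrable (\<pi> k) g"
        by (rule integrable_const_bound[where B="e/2 + 2*B"])
           (use gm e B0 in \<open>auto simp: g_def indicator_def\<close>)
      have hb: "\<bar>f (fst z) - f (snd z)\<bar> \<le> g z" for z
      proof (cases "z \<in> S")
        case True
        then show ?thesis using B[of "fst z"] B[of "snd z"] e unfolding g_def by auto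
      next
        case False
        then have "dist (fst z) (snd z) < d" unfolding S_def by auto
        then have "dist (f (fst z)) (f (snd z)) < e/2" using d(2) by blast
        then show ?thesis using False unfolding g_def by (simp add: dist_real_def)
      qed
      have Ig: "(\<integral>z. g z \<partial>\<pi> k) = e/2 + 2*B * measure (\<pi> k) S"
      proof -
        have ii: "integrable (\<pi> k) (\<lambda>z. indicator S z :: real)"
          by (rule integrable_const_bound[where B=1]) (use Sk in \<open>auto simp: indicator_def\<close>)
        have "(\<integral>z. g z \<partial>\<pi> k) = (\<integral>z. e/2 \<partial>\<pi> k) + (\<integral>z. 2*B * indicator S z \<partial>\<pi> k)"
          unfolding g_def by (rule Bochner_Integration.integral_add) (use ii in auto)
        also have "(\<integral>z. e/2 \<partial>\<pi> k) = e/2" by (simp add: prob_space)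
        also have "(\<integral>z. 2*B * indicator S z \<partial>\<pi> k) = 2*B * measure (\<pi> k) S"
          using Sk by simp
        finally show ?thesis .
      qed
      have "ennreal m * emeasure (\<pi> k) S = (\<integral>\<^sup>+ z. ennreal m * indicator S z \<partial>\<pi> k)"
        using Sk by (simp add: nn_integral_cmult_indicator)
      also have "\<dots> \<le> (\<integral>\<^sup>+ z. c z \<partial>\<pi> k)"
        by (rule nn_integral_mono) (use m(2) in \<open>auto simp: indicator_def\<close>)
      also have "\<dots> \<le> ennreal (b k)" by (rule b)
      finally have "ennreal (m * measure (\<pi> k) S) \<le> ennreal (b k)"
        by (simp add: emeasure_eq_measure ennreal_mult'' m(1) less_imp_le)
      then have "m * measure (\<pi> k) S \<le> b k"
        using bpos[of k] by (simp add: ennreal_le_iff)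
      then have mS: "measure (\<pi> k) S \<le> b k / m" using m(1) by (simp add: field_simps)
      have "(\<integral>x. f x \<partial>\<eta> k) - (\<integral>x. f x \<partial>Q k) = (\<integral>z. f (fst z) - f (snd z) \<partial>\<pi> k)"
        unfolding I1 I2 using int1 int2 by simp
      moreover have "(\<integral>z. f (fst z) - f (snd z) \<partial>\<pi> k) \<le> (\<integral>z. g z \<partial>\<pi> k)"
        by (rule integral_mono) (use int1 int2 intg hb in \<open>auto simp: abs_le_iff\<close>)
      moreover have "- (\<integral>z. f (fst z) - f (snd z) \<partial>\<pi> k) \<le> (\<integral>z. g z \<partial>\<pi> k)"
      proof -
        have "(\<integral>z. f (snd z) - f (fst z) \<partial>\<pi> k) \<le> (\<integral>z. g z \<partial>\<pi> k)"
          by (rule integral_mono) (use int1 int2 intg hb in \<open>auto simp: abs_le_iff\<close>)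
        then show ?thesis using int1 int2 by simp
      qed
      moreover have "2*B * measure (\<pi> k) S \<le> 2*B*(b k / m)"
        using mult_left_mono[OF mS, of "2*B"] B0 by simp
      ultimately show ?thesis unfolding Ig by linarith
    qed
    have "(\<lambda>k. 2*B*(b k / m)) \<longlonglongrightarrow> 2*B*(0/m)"
      using m(1) by (intro tendsto_intros b0) auto
    then have "eventually (\<lambda>k. 2*B*(b k / m) < e/2) sequentially"
      using e by (intro order_tendstoD(2)) auto
    then obtain N where N: "\<And>k. k \<ge> N \<Longrightarrow> 2*B*(b k / m) < e/2"
      unfolding eventually_sequentially by blast
    show "\<exists>no. \<forall>n\<ge>no. norm ((\<integral>x. f x \<partial>\<eta> n) - (\<integral>x. f x \<partial>Q n) - 0) < e"
    proof (intro exI allI impI)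
      fix n assume "N \<le> n"
      with N[of n] bound[of n] show "norm ((\<integral>x. f x \<partial>\<eta> n) - (\<integral>x. f x \<partial>Q n) - 0) < e" by simp
    qed
  qed
qed

definition Pm :: "(nat \<Rightarrow> nat) \<Rightarrow> nat \<Rightarrow> real" where
  "Pm m n = (\<Prod>k<n. 3 * real (m k))"

definition wm :: "(nat \<Rightarrow> nat) \<Rightarrow> nat \<Rightarrow> real" where
  "wm m n = 1 / Pm m (Suc n)"

definition am :: "(nat \<Rightarrow> nat) \<Rightarrow> (nat \<Rightarrow> nat) \<Rightarrow> nat \<Rightarrow> real" where
  "am m i n = 2 * real (i n) * wm m n"

definition tm :: "(nat \<Rightarrow> nat) \<Rightarrow> (nat \<Rightarrow> nat) \<Rightarrow> real" where
  "tm m i = (\<Sum>n. am m i n)"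

context
  fixes m :: "nat \<Rightarrow> nat"
  assumes mpos: "\<And>n. 0 < m n"
begin

lemma Pm_Suc: "Pm m (Suc n) = 3 * real (m n) * Pm m n"
  unfolding Pm_def by (simp add: mult.commute)

lemma Pm_ge: "3 ^ j * Pm m n \<le> Pm m (n + j)"
proof (induction j)
  case 0 then show ?case by simp
next
  case (Suc j)
  have m1: "1 \<le> real (m (n + j))" using mpos[of "n+j"] by simp
  have "3 ^ Suc j * Pm m n = 3 * (3 ^ j * Pm m n)" by simp
  also have "\<dots> \<le> 3 * Pm m (n + j)" using Suc by simp
  also have "\<dots> \<le> 3 * real (m (n + j)) * Pm m (n + j)"
  proof -
    have "0 \<le> Pm m (n + j)" unfolding Pm_def by (intro prod_nonneg) auto
    then show ?thesis using m1 by (simp add: mult_right_mono)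
  qed
  also have "\<dots> = Pm m (n + Suc j)" by (simp add: Pm_Suc)
  finally show ?case .
qed

lemma Pm_pos: "0 < Pm m n"
  unfolding Pm_def using mpos by (intro prod_pos) auto

lemma Pm_ge3: "3 ^ n \<le> Pm m n"
  using Pm_ge[of n 0] by (simp add: Pm_def)

lemma wm_pos: "0 < wm m n"
  unfolding wm_def using Pm_pos by simp

lemma wm_le: "wm m n \<le> (1/3) ^ Suc n"
proof -
  have "3 ^ Suc n \<le> Pm m (Suc n)" by (rule Pm_ge3)
  then have "1 / Pm m (Suc n) \<le> 1 / 3 ^ Suc n"
    by (intro divide_left_mono) (auto simp: Pm_pos)
  then show ?thesis unfolding wm_def by (simp add: power_one_over)
qed

lemma wm_mono: "n \<le> n' \<Longrightarrow> wm m n' \<le> wm m n"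
proof -
  assume "n \<le> n'"
  then obtain j where j: "n' = n + j" using le_Suc_ex by blast
  have "Pm m (Suc n) \<le> 3 ^ j * Pm m (Suc n)" using Pm_pos[of "Suc n"] by simp
  also have "\<dots> \<le> Pm m (Suc n + j)" by (rule Pm_ge)
  finally have "Pm m (Suc n) \<le> Pm m (Suc n')" using j by simp
  then show ?thesis unfolding wm_def by (intro divide_left_mono) (auto simp: Pm_pos)
qed

lemma wm_lim: "wm m \<longlonglongrightarrow> 0"
proof -
  have "(\<lambda>n. (1/3::real) ^ Suc n) \<longlonglongrightarrow> 0"
    by (intro LIMSEQ_Suc LIMSEQ_power_zero) simp
  then show ?thesis
    by (rule Lim_null_comparison[rotated]) (use wm_le wm_pos in \<open>auto intro!: always_eventually simp: less_imp_le\<close>)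
qed

lemma am_bound:
  assumes "\<And>n. i n < m n"
  shows "0 \<le> am m i k" "am m i k \<le> 2 / (3 * Pm m k)"
proof -
  show "0 \<le> am m i k" unfolding am_def using wm_pos[of k] by simp
  have "real (i k) \<le> real (m k)" using assms[of k] by simp
  then have "am m i k \<le> 2 * real (m k) * wm m k"
    unfolding am_def using wm_pos[of k] by (simp add: mult_right_mono)
  also have "\<dots> = 2 / (3 * Pm m k)"
    unfolding wm_def Pm_Suc using mpos[of k] Pm_pos[of k] by (simp add: field_simps)
  finally show "am m i k \<le> 2 / (3 * Pm m k)" .
qed

lemma am_bound2:
  assumes "\<And>n. i n < m n"
  shows "am m i (Suc n + j) \<le> (2/3) * wm m n * (1/3) ^ j"
proof -
  have "am m i (Suc n + j) \<le> 2 / (3 * Pm m (Suc n + j))" by (rule am_bound(2)[OF assms])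
  also have "\<dots> \<le> 2 / (3 * (3 ^ j * Pm m (Suc n)))"
    using Pm_ge[of j "Suc n"] Pm_pos[of "Suc n"] Pm_pos[of "Suc n + j"] by (intro divide_left_mono mult_left_mono) auto
  also have "\<dots> = (2/3) * wm m n * (1/3) ^ j"
    unfolding wm_def by (simp add: field_simps power_one_over)
  finally show ?thesis .
qed

lemma am_summable:
  assumes "\<And>n. i n < m n"
  shows "summable (am m i)"
proof (rule summable_comparison_test')
  show "summable (\<lambda>n. (2/3) * (1/3::real) ^ n)"
    by (intro summable_mult summable_geometric) simp
  fix n :: nat
  have "am m i n \<le> 2 / (3 * Pm m n)" by (rule am_bound(2)[OF assms])
  also have "\<dots> \<le> 2 / (3 * 3 ^ n)"
    using Pm_ge3[of n] Pm_pos[of n] by (intro divide_left_mono mult_left_mono) auto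
  also have "\<dots> = (2/3) * (1/3) ^ n" by (simp add: power_one_over)
  finally show "norm (am m i n) \<le> (2/3) * (1/3) ^ n" using am_bound(1)[OF assms, of n] by simp
qed

definition Rm :: "(nat \<Rightarrow> nat) \<Rightarrow> nat \<Rightarrow> real" where
  "Rm i n = (\<Sum>j. am m i (j + Suc n))"

lemma tm_split:
  assumes "\<And>n. i n < m n"
  shows "tm m i = Rm i n + (\<Sum>k<Suc n. am m i k)"
  unfolding tm_def Rm_def by (rule suminf_split_initial_segment[OF am_summable[OF assms]])

lemma Rm_bound:
  assumes "\<And>n. i n < m n"
  shows "0 \<le> Rm i n" "Rm i n \<le> wm m n"
proof -
  have s1: "summable (\<lambda>j. am m i (j + Suc n))"
    using am_summable[OF assms] by (subst summable_iff_shift) 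
  show "0 \<le> Rm i n" unfolding Rm_def by (rule suminf_nonneg[OF s1]) (rule am_bound(1)[OF assms])
  have gs: "(\<lambda>j. (2/3) * wm m n * (1/3::real) ^ j) sums ((2/3) * wm m n * (1 / (1 - 1/3)))"
    by (intro sums_mult geometric_sums) simp
  have "Rm i n \<le> (\<Sum>j. (2/3) * wm m n * (1/3::real) ^ j)"
    unfolding Rm_def
  proof (rule suminf_le[OF _ s1 sums_summable[OF gs]])
    fix j show "am m i (j + Suc n) \<le> (2/3) * wm m n * (1/3) ^ j"
      using am_bound2[OF assms, of n j] by (simp add: add.commute)
  qed
  also have "\<dots> = wm m n" using sums_unique[OF gs] by simp
  finally show "Rm i n \<le> wm m n" .
qed

lemma tm_close:
  assumes "\<And>n. i n < m n" "\<And>n. i' n < m n" "\<And>k. k \<le> n \<Longrightarrow> i k = i' k"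
  shows "\<bar>tm m i - tm m i'\<bar> \<le> wm m n"
proof -
  have "(\<Sum>k<Suc n. am m i k) = (\<Sum>k<Suc n. am m i' k)"
    by (rule sum.cong) (auto simp: am_def assms(3))
  then have "tm m i - tm m i' = Rm i n - Rm i' n"
    using tm_split[OF assms(1), of n] tm_split[OF assms(2), of n] by simp
  then show ?thesis using Rm_bound[OF assms(1), of n] Rm_bound[OF assms(2), of n] by linarith
qed

lemma tm_gap:
  assumes "\<And>n. i n < m n" "\<And>n. i' n < m n" "\<And>k. k < n \<Longrightarrow> i k = i' k" "i n < i' n"
  shows "wm m n \<le> tm m i' - tm m i"
proof -
  have "(\<Sum>k<n. am m i k) = (\<Sum>k<n. am m i' k)"
    by (rule sum.cong) (auto simp: am_def assms(3))
  then have "tm m i' - tm m i = Rm i' n - Rm i n + (am m i' n - am m i n)"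
    using tm_split[OF assms(1), of n] tm_split[OF assms(2), of n] by simp
  moreover have "2 * wm m n \<le> am m i' n - am m i n"
  proof -
    have "1 \<le> real (i' n) - real (i n)" using assms(4) by linarith
    then have "1 * (2 * wm m n) \<le> (real (i' n) - real (i n)) * (2 * wm m n)"
      using wm_pos[of n] by (intro mult_right_mono) auto
    then show ?thesis unfolding am_def by (simp add: algebra_simps)
  qed
  ultimately show ?thesis using Rm_bound[OF assms(1), of n] Rm_bound[OF assms(2), of n] by linarith
qed

lemma tm_prefix:
  assumes "\<And>n. i n < m n" "\<And>n. i' n < m n" "\<bar>tm m i - tm m i'\<bar> < wm m N"
  shows "k \<le> N \<Longrightarrow> i k = i' k"
proof -
  have "n \<le> Suc N \<longrightarrow> (\<forall>k<n. i k = i' k)" for n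
  proof (induction n)
    case 0 then show ?case by simp
  next
    case (Suc n)
    show ?case
    proof
      assume n: "Suc n \<le> Suc N"
      then have pre: "\<forall>k<n. i k = i' k" using Suc by simp
      have "i n = i' n"
      proof (rule ccontr)
        assume ne: "i n \<noteq> i' n"
        have wn: "wm m N \<le> wm m n" using n by (intro wm_mono) simp
        show False
        proof (cases "i n < i' n")
          case True
          have "wm m n \<le> tm m i' - tm m i" by (rule tm_gap[OF assms(1,2)]) (use pre True in auto)
          then show False using assms(3) wn by linarith
        next
          case False
          then have "i' n < i n" using ne by simp
          have "wm m n \<le> tm m i - tm m i'" by (rule tm_gap[OF assms(2,1)]) (use pre \<open>i' n < i n\<close> in auto)
          then show False using assms(3) wn by linarith
        qed
      qed
      then show "\<forall>k<Suc n. i k = i' k" using pre less_Suc_eq by auto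
    qed
  qed
  then show "k \<le> N \<Longrightarrow> i k = i' k" by auto
qed

lemma tm_inj:
  assumes "\<And>n. i n < m n" "\<And>n. i' n < m n" "tm m i = tm m i'"
  shows "i = i'"
proof
  fix k
  show "i k = i' k" by (rule tm_prefix[OF assms(1,2), of k]) (use assms(3) wm_pos in auto)
qed

lemma tm_bounds:
  assumes "\<And>n. i n < m n"
  shows "0 \<le> tm m i" "tm m i \<le> 1"
proof -
  show "0 \<le> tm m i" unfolding tm_def by (rule suminf_nonneg[OF am_summable[OF assms] am_bound(1)[OF assms]])
  have gs: "(\<lambda>n. (2/3) * (1/3::real) ^ n) sums ((2/3) * (1 / (1 - 1/3)))"
    by (intro sums_mult geometric_sums) simp
  have "tm m i \<le> (\<Sum>n. (2/3) * (1/3::real) ^ n)"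
    unfolding tm_def
  proof (rule suminf_le[OF _ am_summable[OF assms] sums_summable[OF gs]])
    fix n
    have "am m i n \<le> 2 / (3 * Pm m n)" by (rule am_bound(2)[OF assms])
    also have "\<dots> \<le> 2 / (3 * 3 ^ n)"
      using Pm_ge3[of n] Pm_pos[of n] by (intro divide_left_mono mult_left_mono) auto
    also have "\<dots> = (2/3) * (1/3) ^ n" by (simp add: power_one_over)
    finally show "am m i n \<le> (2/3) * (1/3) ^ n" .
  qed
  also have "\<dots> = 1" using sums_unique[OF gs] by simp
  finally show "tm m i \<le> 1" .
qed

end

lemma half_pow_small: "0 < e \<Longrightarrow> \<exists>N. (1/2::real) ^ N < e"
proof -
  assume e: "0 < e"
  have "(\<lambda>n. (1/2::real) ^ n) \<longlonglongrightarrow> 0" by (rule LIMSEQ_power_zero) simp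
  from order_tendstoD(2)[OF this e] show ?thesis unfolding eventually_sequentially by auto
qed

lemma cantor_surj:
  assumes cpt: "compact (UNIV::'a::polish_space set)"
  obtains K :: "real set" and h :: "real \<Rightarrow> 'a::polish_space" where "compact K" "continuous_on K h" "h ` K = UNIV"
proof -
  have "\<exists>cs::'a list. cs \<noteq> [] \<and> (\<forall>x. \<exists>j<length cs. dist x (cs ! j) < (1/2) ^ n)" for n
  proof -
    have "(0::real) < (1/2) ^ n" by simp
    then obtain k where k: "finite k" "(UNIV::'a set) \<subseteq> (\<Union>x\<in>k. ball x ((1/2) ^ n))"
      using cpt unfolding compact_eq_totally_bounded by metis
    obtain cs where cs: "set cs = k" using finite_list[OF k(1)] by blast
    have "\<exists>j<length cs. dist x (cs ! j) < (1/2) ^ n" for x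
    proof -
      obtain y where "y \<in> k" "x \<in> ball y ((1/2) ^ n)" using k(2) by blast
      then obtain j where "j < length cs" "cs ! j = y" using cs by (metis in_set_conv_nth)
      then show ?thesis using \<open>x \<in> ball y ((1/2) ^ n)\<close> by (auto simp: dist_commute)
    qed
    moreover have "cs \<noteq> []" using calculation[of undefined] by auto
    ultimately show ?thesis by blast
  qed
  then obtain cs :: "nat \<Rightarrow> 'a list" where cs: "\<And>n. cs n \<noteq> []"
    "\<And>n x. \<exists>j<length (cs n). dist x (cs n ! j) < (1/2) ^ n"
    by metis
  define m where "m n = length (cs n)" for n
  define c where "c n j = cs n ! j" for n j
  have mpos: "0 < m n" for n using cs(1)[of n] unfolding m_def by simp
  have cov: "\<exists>j<m n. dist x (c n j) < (1/2) ^ n" for n x using cs(2)[of n x] unfolding m_def c_def .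
  define V where "V = {i. (\<forall>n. i n < m n) \<and> (\<forall>n n'. dist (c n (i n)) (c n' (i n')) \<le> (1/2)^n + (1/2)^n')}"
  have VB: "i \<in> V \<Longrightarrow> i n < m n" for i n unfolding V_def by auto
  have Vd: "i \<in> V \<Longrightarrow> dist (c n (i n)) (c n' (i n')) \<le> (1/2)^n + (1/2)^n'" for i n n' unfolding V_def by auto
  define h0 where "h0 i = lim (\<lambda>n. c n (i n))" for i
  have h0lim: "(\<lambda>n. c n (i n)) \<longlonglongrightarrow> h0 i" if "i \<in> V" for i
  proof -
    have "Cauchy (\<lambda>n. c n (i n))"
    proof (rule metric_CauchyI)
      fix e :: real assume "0 < e"
      then obtain M where M: "(1/2::real) ^ M < e/2" using half_pow_small[of "e/2"] by auto
      have "\<forall>a\<ge>M. \<forall>b\<ge>M. dist (c a (i a)) (c b (i b)) < e"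
      proof (intro allI impI)
        fix a b assume "M \<le> a" "M \<le> b"
        then have "(1/2::real)^a \<le> (1/2)^M" "(1/2::real)^b \<le> (1/2)^M"
          by (auto intro: power_decreasing)
        then show "dist (c a (i a)) (c b (i b)) < e" using Vd[OF that, of a b] M by linarith
      qed
      then show "\<exists>M. \<forall>a\<ge>M. \<forall>b\<ge>M. dist (c a (i a)) (c b (i b)) < e" by blast
    qed
    then show ?thesis unfolding h0_def Cauchy_convergent_iff convergent_LIMSEQ_iff .
  qed
  have h0d: "dist (c n (i n)) (h0 i) \<le> (1/2)^n" if "i \<in> V" for i n
  proof -
    have "(\<lambda>n'. dist (c n (i n)) (c n' (i n'))) \<longlonglongrightarrow> dist (c n (i n)) (h0 i)"
      by (intro tendsto_intros h0lim[OF that])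
    moreover have "(\<lambda>n'. (1/2::real)^n + (1/2)^n') \<longlonglongrightarrow> (1/2)^n + 0"
      by (intro tendsto_intros LIMSEQ_power_zero) simp
    ultimately have "dist (c n (i n)) (h0 i) \<le> (1/2)^n + 0"
      by (rule LIMSEQ_le) (use Vd[OF that] in auto)
    then show ?thesis by simp
  qed
  define t where "t = tm m"
  have tB: "\<And>i n. i \<in> V \<Longrightarrow> i n < m n" by (rule VB)
  have inj: "inj_on t V"
    unfolding t_def by (rule inj_onI) (rule tm_inj[OF mpos], (auto intro: VB))
  define K where "K = t ` V"
  define h where "h y = h0 (inv_into V t y)" for y
  have ht: "h (t i) = h0 i" if "i \<in> V" for i unfolding h_def using inv_into_f_f[OF inj that] by simp
  have surj: "h ` K = UNIV"
  proof (intro set_eqI iffI)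
    fix x :: 'a
    define i where "i n = (SOME j. j < m n \<and> dist x (c n j) < (1/2) ^ n)" for n
    have i: "i n < m n \<and> dist x (c n (i n)) < (1/2) ^ n" for n
      unfolding i_def by (rule someI_ex) (rule cov)
    have iV: "i \<in> V"
      unfolding V_def
    proof (intro CollectI conjI allI)
      fix n n'
      show "i n < m n" using i by blast
      have "dist (c n (i n)) (c n' (i n')) \<le> dist (c n (i n)) x + dist x (c n' (i n'))"
        by (rule dist_triangle)
      then show "dist (c n (i n)) (c n' (i n')) \<le> (1/2)^n + (1/2)^n'"
        using i[of n] i[of n'] by (simp add: dist_commute)
    qed
    have "(\<lambda>n. c n (i n)) \<longlonglongrightarrow> x"
    proof (rule tendsto_dist_iff[THEN iffD2], rule Lim_null_comparison)
      show "eventually (\<lambda>n. norm (dist (c n (i n)) x) \<le> (1/2)^n) sequentially"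
        using i by (intro always_eventually) (simp add: dist_commute less_imp_le)
      show "(\<lambda>n. (1/2::real)^n) \<longlonglongrightarrow> 0" by (rule LIMSEQ_power_zero) simp
    qed
    then have "h0 i = x" using LIMSEQ_unique[OF h0lim[OF iV]] by simp
    then show "x \<in> h ` K" unfolding K_def using ht[OF iV] iV by force
  qed simp
  have cont: "continuous_on K h"
    unfolding continuous_on_iff
  proof (intro ballI allI impI)
    fix y e assume "y \<in> K" "0 < (e::real)"
    then obtain i where iV: "i \<in> V" and y: "y = t i" unfolding K_def by blast
    obtain N where N: "(1/2::real) ^ N < e/2" using half_pow_small[of "e/2"] \<open>0 < e\<close> by auto
    show "\<exists>d>0. \<forall>y'\<in>K. dist y' y < d \<longrightarrow> dist (h y') (h y) < e"
    proof (intro exI conjI ballI impI)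
      show "0 < wm m N" by (rule wm_pos[OF mpos])
      fix y' assume "y' \<in> K" "dist y' y < wm m N"
      then obtain i' where i'V: "i' \<in> V" and y': "y' = t i'" unfolding K_def by blast
      have "\<bar>tm m i' - tm m i\<bar> < wm m N" using \<open>dist y' y < wm m N\<close> y y' by (simp add: t_def dist_real_def)
      from tm_prefix[OF mpos VB[OF i'V] VB[OF iV] this, where k=N] have "i' N = i N" by simp
      then have "dist (h0 i') (h0 i) \<le> dist (h0 i') (c N (i' N)) + dist (c N (i N)) (h0 i)"
        using dist_triangle[of "h0 i'" "h0 i" "c N (i N)"] by simp
      also have "\<dots> \<le> (1/2)^N + (1/2)^N"
        using h0d[OF i'V, of N] h0d[OF iV, of N] by (simp add: dist_commute)
      finally show "dist (h y') (h y) < e" using N y y' ht iV i'V by simp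
    qed
  qed
  have bnd: "bounded K"
    unfolding bounded_iff K_def t_def using tm_bounds[OF mpos] VB by (intro exI[of _ 1]) force
  have clo: "closed K"
    unfolding closed_sequential_limits
  proof (intro allI impI, elim conjE)
    fix y l assume yK: "\<forall>n. y n \<in> K" and yl: "y \<longlonglongrightarrow> l"
    have "\<forall>j. \<exists>i. i \<in> V \<and> y j = t i" using yK unfolding K_def by blast
    from choice[OF this] obtain I where I': "\<forall>j. I j \<in> V \<and> y j = t (I j)" by blast
    then have I: "\<And>j. I j \<in> V" "\<And>j. y j = t (I j)" by auto
    have cy: "Cauchy y" using yl by (rule LIMSEQ_imp_Cauchy)
    have "\<exists>N. \<forall>a\<ge>N. \<forall>b\<ge>N. dist (y a) (y b) < wm m n" for n
      using metric_CauchyD[OF cy wm_pos[of m, OF mpos, of n]] by blast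
    then obtain Nf where Nf: "\<And>n a b. a \<ge> Nf n \<Longrightarrow> b \<ge> Nf n \<Longrightarrow> dist (y a) (y b) < wm m n" by metis
    have agree: "I a k = I b k" if "a \<ge> Nf n" "b \<ge> Nf n" "k \<le> n" for a b n k
    proof -
      have "\<bar>tm m (I a) - tm m (I b)\<bar> < wm m n" using Nf[OF that(1,2)] I(2) by (simp add: t_def dist_real_def)
      from tm_prefix[OF mpos VB[OF I(1)[of a]] VB[OF I(1)[of b]] this, where k=k] show ?thesis using that(3) by simp
    qed
    define i where "i n = I (Nf n) n" for n
    define Mx where "Mx n = Max (Nf ` {..n})" for n
    have Mx: "Nf k \<le> Mx n" if "k \<le> n" for k n unfolding Mx_def using that by (intro Max_ge) auto
    have Ii: "I j k = i k" if "j \<ge> Mx n" "k \<le> n" for j k n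
      unfolding i_def using agree[where a=j and b="Nf k" and n=k and k=k] Mx[OF that(2)] that(1) by simp
    have iV: "i \<in> V"
      unfolding V_def
    proof (intro CollectI conjI allI)
      fix n n'
      show "i n < m n" unfolding i_def using VB[OF I(1)] by blast
      define j where "j = Mx (max n n')"
      have "I j n = i n" "I j n' = i n'" using Ii[of "max n n'" j] unfolding j_def by auto
      then show "dist (c n (i n)) (c n' (i n')) \<le> (1/2)^n + (1/2)^n'" using Vd[OF I(1)[of j], of n n'] by simp
    qed
    have "y \<longlonglongrightarrow> t i"
    proof (rule LIMSEQ_I)
      fix e :: real assume "0 < e"
      from order_tendstoD(2)[OF wm_lim[of m, OF mpos] this] obtain n where n: "wm m n < e"
        unfolding eventually_sequentially by auto
      show "\<exists>no. \<forall>j\<ge>no. norm (y j - t i) < e"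
      proof (intro exI allI impI)
        fix j assume "Mx n \<le> j"
        then have "\<bar>tm m (I j) - tm m i\<bar> \<le> wm m n"
          by (intro tm_close[OF mpos]) (use VB I(1) iV Ii in auto)
        then show "norm (y j - t i) < e" using n I(2)[of j] by (simp add: t_def)
      qed
    qed
    then have "l = t i" using LIMSEQ_unique[OF yl] by blast
    then show "l \<in> K" unfolding K_def using iV by blast
  qed
  have "compact K" using bnd clo compact_eq_bounded_closed by blast
  then show ?thesis using that cont surj by blast
qed

lemma borel_section:
  fixes h :: "real \<Rightarrow> 'a::polish_space"
  assumes K: "compact K" and hc: "continuous_on K h" and hK: "h ` K = UNIV"
  obtains s where "s \<in> borel_measurable borel" "\<And>x. s x \<in> K" "\<And>x. h (s x) = x"
proof -
  define P where "P x = K \<inter> h -` {x}" for x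
  define s where "s x = Inf (P x)" for x
  have Kc: "closed K" using K compact_imp_closed by blast
  have bK: "bdd_below K" using compact_imp_bounded[OF K] by (rule bounded_imp_bdd_below)
  have Pne: "P x \<noteq> {}" for x
  proof -
    have "x \<in> h ` K" using hK by simp
    then show ?thesis unfolding P_def by blast
  qed
  have Pc: "closed (P x)" for x unfolding P_def by (rule continuous_closed_preimage[OF hc Kc]) simp
  have Pb: "bdd_below (P x)" for x using bK unfolding P_def by (meson bdd_below_mono inf_le1)
  have sP: "s x \<in> P x" for x unfolding s_def by (rule closed_contains_Inf[OF Pne Pb Pc])
  have sK: "s x \<in> K" for x using sP[of x] unfolding P_def by blast
  have hs: "h (s x) = x" for x using sP[of x] unfolding P_def by blast
  have "s \<in> borel_measurable borel"
    unfolding borel_measurable_iff_le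
  proof
    fix a
    have eq: "{w \<in> space borel. s w \<le> a} = h ` (K \<inter> {..a})"
    proof (intro set_eqI iffI)
      fix x assume "x \<in> {w \<in> space borel. s w \<le> a}"
      then have "s x \<le> a" by simp
      then show "x \<in> h ` (K \<inter> {..a})" using sK[of x] hs[of x] by force
    next
      fix x assume "x \<in> h ` (K \<inter> {..a})"
      then obtain y where y: "y \<in> K" "y \<le> a" "x = h y" by auto
      then have "y \<in> P x" unfolding P_def by simp
      then have "s x \<le> y" unfolding s_def by (rule cInf_lower[OF _ Pb])
      then show "x \<in> {w \<in> space borel. s w \<le> a}" using y by simp
    qed
    have "compact (K \<inter> {..a})" using K by (intro compact_Int_closed) auto
    moreover have "continuous_on (K \<inter> {..a}) h" by (rule continuous_on_subset[OF hc]) auto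
    ultimately have "compact (h ` (K \<inter> {..a}))"
      using compact_continuous_image by blast
    then have "closed (h ` (K \<inter> {..a}))" by (rule compact_imp_closed)
    then show "{w \<in> space borel. s w \<le> a} \<in> sets borel" unfolding eq by simp
  qed
  then show ?thesis using that sK hs by blast
qed

lemma prokhorov_compact:
  fixes \<mu> :: "nat \<Rightarrow> 'a::polish_space measure"
  assumes cpt: "compact (UNIV::'a set)" and \<mu>: "\<And>n. \<mu> n \<in> Prob"
  shows "\<exists>r \<mu>'. strict_mono r \<and> \<mu>' \<in> Prob \<and>
     (\<forall>f::'a\<Rightarrow>real. continuous_on UNIV f \<longrightarrow> (\<lambda>k. \<integral>x. f x \<partial>\<mu> (r k)) \<longlonglongrightarrow> (\<integral>x. f x \<partial>\<mu>'))"
proof -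
  obtain K :: "real set" and h :: "real \<Rightarrow> 'a" where K: "compact K" and hc: "continuous_on K h" and hK: "h ` K = UNIV"
    using cantor_surj[OF cpt] by blast
  obtain s where sm: "s \<in> borel_measurable borel" and sK: "\<And>x. s x \<in> K" and hs: "\<And>x. h (s x) = x"
    using borel_section[OF K hc hK] by blast
  have Kne: "K \<noteq> {}" using sK by blast
  have Kc: "closed K" using K compact_imp_closed by blast
  have Kb: "K \<in> sets borel" using Kc by simp
  obtain x0 where x0: "x0 \<in> K" using Kne by blast
  define h' where "h' x = (if x \<in> K then h x else h x0)" for x
  have h'm: "h' \<in> borel_measurable borel"
    unfolding h'_def by (rule borel_measurable_continuous_on_if[OF Kb hc continuous_on_const])
  have h's: "h' (s x) = x" for x unfolding h'_def using sK hs by simp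
  define \<nu> where "\<nu> n = distr (\<mu> n) borel s" for n
  have s\<mu>: "sets (\<mu> n) = sets borel" for n using \<mu>[of n] by (simp add: Prob_def)
  have sm\<mu>: "s \<in> measurable (\<mu> n) borel" for n using meas_sets_borel[OF s\<mu> sm] .
  have rd: "real_distribution (\<nu> n)" for n
  proof -
    interpret prob_space "\<mu> n" using \<mu>[of n] by (simp add: Prob_def)
    show ?thesis unfolding \<nu>_def using sm\<mu>[of n] by simp
  qed
  have \<nu>K: "emeasure (\<nu> n) K = 1" for n
  proof -
    interpret prob_space "\<mu> n" using \<mu>[of n] by (simp add: Prob_def)
    have "emeasure (\<nu> n) K = emeasure (\<mu> n) (s -` K \<inter> space (\<mu> n))"
      unfolding \<nu>_def by (rule emeasure_distr[OF sm\<mu> Kb])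
    also have "s -` K \<inter> space (\<mu> n) = space (\<mu> n)" using sK by auto
    finally show ?thesis by (simp add: emeasure_space_1)
  qed
  have \<nu>AE: "AE x in \<nu> n. x \<in> K" for n
  proof -
    interpret real_distribution "\<nu> n" by (rule rd)
    show ?thesis using \<nu>K[of n] Kb by (subst AE_prob_1) (auto simp: emeasure_eq_measure)
  qed
  obtain lo hi where lohi: "K \<subseteq> {lo<..hi}"
  proof -
    have "bounded K" using K compact_imp_bounded by blast
    then obtain B where "\<forall>x\<in>K. \<bar>x\<bar> \<le> B" unfolding bounded_iff by auto
    then have "K \<subseteq> {-B-1<..B}" by (auto simp: abs_le_iff)
    then show ?thesis using that by blast
  qed
  have tight: "tight \<nu>"
    unfolding tight_def
  proof (intro conjI allI impI)
    show "real_distribution (\<nu> n)" for n by (rule rd)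
    fix e :: real assume "0 < e"
    show "\<exists>a b. a < b \<and> (\<forall>n. 1 - e < measure (\<nu> n) {a<..b})"
    proof (intro exI conjI allI)
      show "lo < hi" using lohi Kne by auto
      fix n
      interpret real_distribution "\<nu> n" by (rule rd)
      have "measure (\<nu> n) K \<le> measure (\<nu> n) {lo<..hi}"
        using lohi by (intro finite_measure_mono) auto
      moreover have "measure (\<nu> n) K = 1" using \<nu>K[of n] by (simp add: emeasure_eq_measure)
      ultimately show "1 - e < measure (\<nu> n) {lo<..hi}" using \<open>0 < e\<close> by simp
    qed
  qed
  obtain r M where r: "strict_mono r" and M: "real_distribution M" and wc: "weak_conv_m (\<nu> \<circ> id \<circ> r) M"
    using tight_imp_convergent_subsubsequence[OF tight strict_mono_id] by blast
  have rd': "real_distribution ((\<nu> \<circ> id \<circ> r) n)" for n using rd by simp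
  have conv: "(\<lambda>k. \<integral>x. F x \<partial>\<nu> (r k)) \<longlonglongrightarrow> (\<integral>x. F x \<partial>M)"
    if "continuous_on UNIV F" "\<And>x. \<bar>F x\<bar> \<le> B" for F :: "real \<Rightarrow> real" and B
    using weak_conv_imp_integral_bdd_continuous_conv[OF rd' M wc, of F B] that
    by (simp add: continuous_on_eq_continuous_at)
  interpret M: real_distribution M by (rule M)
  have MK: "AE x in M. x \<in> K"
  proof -
    define g where "g x = min 1 (infdist x K)" for x
    have gc: "continuous_on UNIV g" unfolding g_def by (intro continuous_intros)
    have gb: "\<bar>g x\<bar> \<le> 1" for x unfolding g_def using infdist_nonneg[of x K] by auto
    have g0: "g x = 0" if "x \<in> K" for x unfolding g_def using that by simp
    have "(\<integral>x. g x \<partial>\<nu> (r k)) = 0" for k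
    proof -
      have "(\<integral>x. g x \<partial>\<nu> (r k)) = (\<integral>x. 0 \<partial>\<nu> (r k))"
      proof (rule integral_cong_AE)
        show "g \<in> borel_measurable (\<nu> (r k))"
          using meas_sets_borel[of "\<nu> (r k)", OF _ borel_measurable_continuous_onI[OF gc]] by (simp add: \<nu>_def)
        show "(\<lambda>x. 0) \<in> borel_measurable (\<nu> (r k))" by simp
        show "AE x in \<nu> (r k). g x = 0" by (rule eventually_mono[OF \<nu>AE[of "r k"]]) (simp add: g0)
      qed
      then show ?thesis by simp
    qed
    then have "(\<lambda>k. \<integral>x. g x \<partial>\<nu> (r k)) = (\<lambda>k. 0)" by simp
    then have "(\<lambda>k. 0::real) \<longlonglongrightarrow> (\<integral>x. g x \<partial>M)" using conv[OF gc gb] by simp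
    then have g0M: "(\<integral>x. g x \<partial>M) = 0" by (simp add: LIMSEQ_const_iff)
    moreover have gint: "integrable M g"
      by (rule M.integrable_const_bound[where B=1]) (use gb borel_measurable_continuous_onI[OF gc] in auto)
    have "AE x in M. 0 \<le> g x" by (rule AE_I2) (simp add: g_def infdist_nonneg)
    then have "AE x in M. g x = 0" using integral_nonneg_eq_0_iff_AE[OF gint] g0M by simp
    then show ?thesis
    proof (rule eventually_mono)
      fix x assume "g x = 0"
      then have "infdist x K = 0" unfolding g_def by (auto simp: min_def split: if_splits)
      then show "x \<in> K" using in_closed_iff_infdist_zero[OF Kc Kne] by simp
    qed
  qed
  define \<mu>' where "\<mu>' = distr M borel h'"
  have \<mu>'P: "\<mu>' \<in> Prob"
    unfolding Prob_def \<mu>'_def using M.prob_space_distr[OF meas_sets_borel[OF M.events_eq_borel h'm]] by simp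
  show ?thesis
  proof (intro exI conjI allI impI)
    show "strict_mono r" by (rule r)
    show "\<mu>' \<in> Prob" by (rule \<mu>'P)
    fix f :: "'a \<Rightarrow> real" assume f: "continuous_on UNIV f"
    have "bounded (range f)" using compact_continuous_image[OF f cpt] compact_imp_bounded by blast
    then obtain B where B0: "0 < B" and B: "\<And>x. \<bar>f x\<bar> \<le> B" unfolding bounded_pos by auto
    have fm: "f \<in> borel_measurable borel" by (rule borel_measurable_continuous_onI[OF f])
    have fhK: "continuous_on K (\<lambda>x. f (h x))" by (rule continuous_on_compose2[OF f hc]) auto
    have cl: "closedin (top_of_set UNIV) K" using Kc by simp
    have nb: "\<And>x. x \<in> K \<Longrightarrow> norm (f (h x)) \<le> B" using B by simp
    obtain F where Fc: "continuous_on UNIV F" and FK: "\<And>x. x \<in> K \<Longrightarrow> F x = f (h x)"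
      and FB0: "\<And>x. x \<in> UNIV \<Longrightarrow> norm (F x) \<le> B"
      using Tietze[OF fhK cl less_imp_le[OF B0] nb] by blast
    have FB: "norm (F x) \<le> B" for x using FB0 by simp
    have FB': "\<bar>F x\<bar> \<le> B" for x using FB[of x] by simp
    have eq1: "(\<integral>x. f x \<partial>\<mu> n) = (\<integral>x. F x \<partial>\<nu> n)" for n
    proof -
      have "(\<integral>x. F x \<partial>\<nu> n) = (\<integral>x. f (h' x) \<partial>\<nu> n)"
      proof (rule integral_cong_AE)
        show "F \<in> borel_measurable (\<nu> n)"
          using meas_sets_borel[of "\<nu> n", OF _ borel_measurable_continuous_onI[OF Fc]] by (simp add: \<nu>_def)
        show "(\<lambda>x. f (h' x)) \<in> borel_measurable (\<nu> n)"
          using meas_sets_borel[of "\<nu> n", OF _ measurable_compose[OF h'm fm]] by (simp add: \<nu>_def)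
        show "AE x in \<nu> n. F x = f (h' x)" by (rule eventually_mono[OF \<nu>AE[of n]]) (simp add: FK h'_def)
      qed
      also have "\<dots> = (\<integral>x. f (h' (s x)) \<partial>\<mu> n)"
        unfolding \<nu>_def by (rule integral_distr[OF sm\<mu>]) (use h'm fm in simp)
      finally show ?thesis by (simp add: h's)
    qed
    have eq2: "(\<integral>x. F x \<partial>M) = (\<integral>x. f x \<partial>\<mu>')"
    proof -
      have "(\<integral>x. F x \<partial>M) = (\<integral>x. f (h' x) \<partial>M)"
      proof (rule integral_cong_AE)
        show "F \<in> borel_measurable M"
          using meas_sets_borel[OF M.events_eq_borel borel_measurable_continuous_onI[OF Fc]] .
        show "(\<lambda>x. f (h' x)) \<in> borel_measurable M"
          using meas_sets_borel[OF M.events_eq_borel measurable_compose[OF h'm fm]] .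
        show "AE x in M. F x = f (h' x)" by (rule eventually_mono[OF MK]) (simp add: FK h'_def)
      qed
      also have "\<dots> = (\<integral>x. f x \<partial>\<mu>')"
        unfolding \<mu>'_def by (rule integral_distr[symmetric]) (use h'm fm in simp_all)
      finally show ?thesis .
    qed
    show "(\<lambda>k. \<integral>x. f x \<partial>\<mu> (r k)) \<longlonglongrightarrow> (\<integral>x. f x \<partial>\<mu>')"
      unfolding eq1 eq2[symmetric] by (rule conv[OF Fc FB'])
  qed
qed

lemma ennreal_le_add_self: "(a::ennreal) \<le> a + b"
  using add_mono[of a a 0 b] by simp

lemma main_single:
  fixes P :: "'a::polish_space measure"
    and L :: "'a \<Rightarrow> ereal"
    and D :: "'a measure \<Rightarrow> 'a measure \<Rightarrow> ennreal"
    and c :: "'a \<times> 'a \<Rightarrow> ennreal"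
    and \<epsilon> :: real
  assumes cpt: "compact (UNIV :: 'a set)"
    and usc: "usc L" and fin: "\<forall>x. L x \<noteq> \<infinity>"
    and lscD: "weak_lsc (\<lambda>Q. D Q P)"
    and cf: "cost_function c"
    and c0: "\<forall>x1 x2. c (x1, x2) = 0 \<longleftrightarrow> x1 = x2"
    and \<epsilon>: "\<epsilon> > 0"
  shows "\<And>r. (SUP Q\<in>{Q \<in> Prob. D Q P \<le> ennreal \<epsilon>}. expect Q L)
           \<le> (SUP Q\<in>{Q \<in> Prob. OT_reg_div D (\<lambda>z. ennreal r * c z) Q P \<le> ennreal \<epsilon>}. expect Q L)"
    and "((\<lambda>r::real. SUP Q\<in>{Q \<in> Prob. OT_reg_div D (\<lambda>z. ennreal r * c z) Q P \<le> ennreal \<epsilon>}. expect Q L)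
            \<longlongrightarrow> (SUP Q\<in>{Q \<in> Prob. D Q P \<le> ennreal \<epsilon>}. expect Q L)) at_top"
proof -
  define A where "A r = {Q \<in> Prob. OT_reg_div D (\<lambda>z. ennreal r * c z) Q P \<le> ennreal \<epsilon>}" for r :: real
  define Ainf where "Ainf = {Q \<in> Prob. D Q P \<le> ennreal \<epsilon>}"
  define S where "S r = (SUP Q\<in>A r. expect Q L)" for r
  define Sinf where "Sinf = (SUP Q\<in>Ainf. expect Q L)"
  have lscc: "lsc c" using cf unfolding cost_function_def .
  have cm: "c \<in> borel_measurable borel" by (rule lsc_measurable[OF lscc])
  have sub: "Ainf \<subseteq> A r" for r
  proof
    fix Q assume "Q \<in> Ainf"
    then have Q: "Q \<in> Prob" "D Q P \<le> ennreal \<epsilon>" unfolding Ainf_def by auto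
    have "OT_cost (\<lambda>z. ennreal r * c z) Q Q = 0"
      by (rule OT_cost_diag[OF Q(1)]) (use c0 cm in auto)
    then have "OT_reg_div D (\<lambda>z. ennreal r * c z) Q P \<le> D Q P"
      unfolding OT_reg_div_def using INF_lower[OF Q(1), of "\<lambda>\<eta>. D \<eta> P + OT_cost (\<lambda>z. ennreal r * c z) \<eta> Q"]
      by simp
    then show "Q \<in> A r" unfolding A_def using Q by auto
  qed
  then show "\<And>r. (SUP Q\<in>{Q \<in> Prob. D Q P \<le> ennreal \<epsilon>}. expect Q L)
           \<le> (SUP Q\<in>{Q \<in> Prob. OT_reg_div D (\<lambda>z. ennreal r * c z) Q P \<le> ennreal \<epsilon>}. expect Q L)"
    unfolding A_def Ainf_def by (rule SUP_subset_mono) auto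
  have Sge: "Sinf \<le> S r" for r
    unfolding S_def Sinf_def using sub by (rule SUP_subset_mono) auto
  have OTmono: "OT_cost (\<lambda>z. ennreal r * c z) \<eta> Q \<le> OT_cost (\<lambda>z. ennreal r' * c z) \<eta> Q"
    if "r \<le> r'" for r r' \<eta> Q
    unfolding OT_cost_def
  proof (rule INF_mono)
    fix \<pi> assume "\<pi> \<in> couplings \<eta> Q"
    moreover have "(\<integral>\<^sup>+ z. ennreal r * c z \<partial>\<pi>) \<le> (\<integral>\<^sup>+ z. ennreal r' * c z \<partial>\<pi>)"
      by (intro nn_integral_mono mult_right_mono ennreal_leI that) simp
    ultimately show "\<exists>\<pi>'\<in>couplings \<eta> Q. (\<integral>\<^sup>+ z. ennreal r * c z \<partial>\<pi>') \<le> (\<integral>\<^sup>+ z. ennreal r' * c z \<partial>\<pi>)"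
      by blast
  qed
  have Amono: "A r' \<subseteq> A r" if "r \<le> r'" for r r'
  proof
    fix Q assume "Q \<in> A r'"
    moreover have "OT_reg_div D (\<lambda>z. ennreal r * c z) Q P \<le> OT_reg_div D (\<lambda>z. ennreal r' * c z) Q P"
      unfolding OT_reg_div_def
      by (rule INF_mono) (use add_left_mono[OF OTmono[OF that]] in blast)
    ultimately show "Q \<in> A r" unfolding A_def by auto
  qed
  have Santi: "S r' \<le> S r" if "r \<le> r'" for r r'
    unfolding S_def using Amono[OF that] by (rule SUP_subset_mono) auto
  have key: "eventually (\<lambda>r. S r < y) at_top" if y: "Sinf < y" for y
  proof (rule ccontr)
    assume ne: "\<not> eventually (\<lambda>r. S r < y) at_top"
    have Sy: "y \<le> S (real (Suc n))" for n
    proof (rule ccontr)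
      assume "\<not> y \<le> S (real (Suc n))"
      then have "S (real (Suc n)) < y" by simp
      then have "\<forall>r\<ge>real (Suc n). S r < y" using Santi le_less_trans by blast
      then have "eventually (\<lambda>r. S r < y) at_top" unfolding eventually_at_top_linorder by blast
      then show False using ne by simp
    qed
    obtain y' where y': "Sinf < y'" "y' < y" using dense[OF y] by blast
    have "\<exists>Q. Q \<in> A (real (Suc n)) \<and> y' < expect Q L" for n
    proof -
      have "y' < S (real (Suc n))" using y'(2) Sy[of n] by simp
      then show ?thesis unfolding S_def less_SUP_iff by blast
    qed
    then obtain Qs where Qs: "\<And>n. Qs n \<in> A (real (Suc n))" "\<And>n. y' < expect (Qs n) L"
      by metis
    have "\<exists>\<eta> \<pi>. \<eta> \<in> Prob \<and> \<pi> \<in> couplings \<eta> (Qs n) \<and> D \<eta> P \<le> ennreal (\<epsilon> + 1 / real (Suc n))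
             \<and> (\<integral>\<^sup>+ z. c z \<partial>\<pi>) \<le> ennreal ((\<epsilon> + 1) / real (Suc n))" for n
    proof -
      have QP: "Qs n \<in> Prob" and le: "OT_reg_div D (\<lambda>z. ennreal (real (Suc n)) * c z) (Qs n) P \<le> ennreal \<epsilon>"
        using Qs(1)[of n] unfolding A_def by auto
      have "ennreal \<epsilon> < ennreal (\<epsilon> + 1 / real (Suc n))"
        using \<epsilon> by (simp add: ennreal_less_iff)
      with le have "OT_reg_div D (\<lambda>z. ennreal (real (Suc n)) * c z) (Qs n) P < ennreal (\<epsilon> + 1 / real (Suc n))"
        by (rule le_less_trans)
      then obtain \<eta> where \<eta>: "\<eta> \<in> Prob"
        "D \<eta> P + OT_cost (\<lambda>z. ennreal (real (Suc n)) * c z) \<eta> (Qs n) < ennreal (\<epsilon> + 1 / real (Suc n))"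
        unfolding OT_reg_div_def INF_less_iff by blast
      have D\<eta>: "D \<eta> P \<le> ennreal (\<epsilon> + 1 / real (Suc n))"
        using \<eta>(2) ennreal_le_add_self[of "D \<eta> P"] by (meson le_less_trans less_imp_le)
      have "OT_cost (\<lambda>z. ennreal (real (Suc n)) * c z) \<eta> (Qs n) \<le> D \<eta> P + OT_cost (\<lambda>z. ennreal (real (Suc n)) * c z) \<eta> (Qs n)"
        by (subst add.commute) (rule ennreal_le_add_self)
      then have "OT_cost (\<lambda>z. ennreal (real (Suc n)) * c z) \<eta> (Qs n) < ennreal (\<epsilon> + 1 / real (Suc n))"
        using \<eta>(2) by (rule le_less_trans)
      also have "\<dots> \<le> ennreal (\<epsilon> + 1)" by (intro ennreal_leI) (simp add: field_simps)
      finally obtain \<pi> where \<pi>: "\<pi> \<in> couplings \<eta> (Qs n)"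
        "(\<integral>\<^sup>+ z. ennreal (real (Suc n)) * c z \<partial>\<pi>) < ennreal (\<epsilon> + 1)"
        unfolding OT_cost_def INF_less_iff by blast
      have s\<pi>: "sets \<pi> = sets borel" using \<pi>(1) unfolding couplings_def Prob_def by auto
      have "(\<integral>\<^sup>+ z. ennreal (real (Suc n)) * c z \<partial>\<pi>) = ennreal (real (Suc n)) * (\<integral>\<^sup>+ z. c z \<partial>\<pi>)"
        by (rule nn_integral_cmult) (rule meas_sets_borel[OF s\<pi> cm])
      with \<pi>(2) have lt: "ennreal (real (Suc n)) * (\<integral>\<^sup>+ z. c z \<partial>\<pi>) < ennreal (\<epsilon> + 1)" by simp
      have "(\<integral>\<^sup>+ z. c z \<partial>\<pi>) \<noteq> \<infinity>"
      proof
        assume "(\<integral>\<^sup>+ z. c z \<partial>\<pi>) = \<infinity>"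
        then have "ennreal (real (Suc n)) * (\<integral>\<^sup>+ z. c z \<partial>\<pi>) = \<infinity>" by (simp add: ennreal_mult_top)
        then show False using lt by simp
      qed
      then obtain i where i: "(\<integral>\<^sup>+ z. c z \<partial>\<pi>) = ennreal i" "0 \<le> i"
        by (cases "(\<integral>\<^sup>+ z. c z \<partial>\<pi>)" rule: ennreal_cases) auto
      have "ennreal (real (Suc n) * i) < ennreal (\<epsilon> + 1)"
        using lt i by (simp add: ennreal_mult)
      then have "real (Suc n) * i < \<epsilon> + 1" using i(2) by (simp add: ennreal_less_iff)
      then have "i \<le> (\<epsilon> + 1) / real (Suc n)" by (simp add: field_simps)
      then have "(\<integral>\<^sup>+ z. c z \<partial>\<pi>) \<le> ennreal ((\<epsilon> + 1) / real (Suc n))"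
        using i by (simp add: ennreal_leI)
      then show ?thesis using \<eta>(1) \<pi>(1) D\<eta> by blast
    qed
    then obtain \<eta>s \<pi>s where \<eta>s: "\<And>n. \<eta>s n \<in> Prob" "\<And>n. \<pi>s n \<in> couplings (\<eta>s n) (Qs n)"
      "\<And>n. D (\<eta>s n) P \<le> ennreal (\<epsilon> + 1 / real (Suc n))"
      "\<And>n. (\<integral>\<^sup>+ z. c z \<partial>\<pi>s n) \<le> ennreal ((\<epsilon> + 1) / real (Suc n))"
      by metis
    have QsP: "Qs n \<in> Prob" for n using Qs(1)[of n] unfolding A_def by auto
    obtain r Q' where r: "strict_mono r" and Q': "Q' \<in> Prob"
      and convQ: "\<And>f::'a\<Rightarrow>real. continuous_on UNIV f \<Longrightarrow> (\<lambda>k. \<integral>x. f x \<partial>Qs (r k)) \<longlonglongrightarrow> (\<integral>x. f x \<partial>Q')"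
      using prokhorov_compact[of Qs, OF cpt QsP] by blast
    have lim0: "(\<lambda>n. (\<epsilon> + 1) / real (Suc n)) \<longlonglongrightarrow> 0"
      using LIMSEQ_Suc[OF lim_const_over_n[of "\<epsilon> + 1"]] by simp
    have b0: "(\<lambda>k. (\<epsilon> + 1) / real (Suc (r k))) \<longlonglongrightarrow> 0"
      using LIMSEQ_subseq_LIMSEQ[OF lim0 r] by (simp add: comp_def)
    have conv\<eta>: "(\<lambda>k. \<integral>x. f x \<partial>\<eta>s (r k)) \<longlonglongrightarrow> (\<integral>x. f x \<partial>Q')" if f: "continuous_on UNIV f" for f :: "'a \<Rightarrow> real"
    proof -
      have "(\<lambda>k. (\<integral>x. f x \<partial>\<eta>s (r k)) - (\<integral>x. f x \<partial>Qs (r k))) \<longlonglongrightarrow> 0"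
        by (rule coupling_conv[OF cpt lscc _ \<eta>s(2) \<eta>s(4) b0 _ f]) (use c0 \<epsilon> in auto)
      from tendsto_add[OF this convQ[OF f]] show ?thesis by simp
    qed
    have DQ': "D Q' P \<le> ennreal \<epsilon>"
    proof (rule ccontr)
      assume "\<not> D Q' P \<le> ennreal \<epsilon>"
      then have "ennreal \<epsilon> < D Q' P" by simp
      then obtain t where t: "ennreal \<epsilon> < t" "t < D Q' P" using dense by blast
      have "openin weak_topology {Q \<in> Prob. t < D Q P}" using lscD unfolding weak_lsc_def by blast
      then have ev1: "eventually (\<lambda>k. \<eta>s (r k) \<in> {Q \<in> Prob. t < D Q P}) sequentially"
        by (rule weak_open_conv) (use Q' t(2) conv\<eta> \<eta>s(1) in auto)
      have "(\<lambda>k. ennreal (\<epsilon> + 1 / real (Suc (r k)))) \<longlonglongrightarrow> ennreal (\<epsilon> + 0)"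
      proof (intro tendsto_ennrealI tendsto_add tendsto_const)
        show "(\<lambda>k. 1 / real (Suc (r k))) \<longlonglongrightarrow> 0"
          using LIMSEQ_subseq_LIMSEQ[OF LIMSEQ_Suc[OF lim_const_over_n[of 1]] r] by (simp add: comp_def)
      qed
      then have ev2: "eventually (\<lambda>k. ennreal (\<epsilon> + 1 / real (Suc (r k))) < t) sequentially"
        using t(1) by (intro order_tendstoD(2)) auto
      from eventually_conj[OF ev1 ev2] have "eventually (\<lambda>k. False) sequentially"
      proof (rule eventually_mono)
        fix k assume "\<eta>s (r k) \<in> {Q \<in> Prob. t < D Q P} \<and> ennreal (\<epsilon> + 1 / real (Suc (r k))) < t"
        then show False using \<eta>s(3)[of "r k"] by auto
      qed
      then show False by simp
    qed
    have "y' \<le> expect Q' L"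
      by (rule expect_usc[OF cpt usc fin Q' QsP]) (use convQ Qs(2) less_imp_le in auto)
    also have "\<dots> \<le> Sinf" unfolding Sinf_def Ainf_def using Q' DQ' by (intro SUP_upper) auto
    finally show False using y'(1) by simp
  qed
  show "(S \<longlongrightarrow> Sinf) at_top"
  proof (rule order_tendstoI)
    fix a assume "a < Sinf"
    then have "\<forall>r. a < S r" using Sge less_le_trans by blast
    then show "eventually (\<lambda>r. a < S r) at_top" by (rule always_eventually)
  next
    fix a assume "Sinf < a"
    then show "eventually (\<lambda>r. S r < a) at_top" by (rule key)
  qed
qed

theorem theorem9:
  fixes P :: "'a::polish_space measure"
    and L :: "'a \<Rightarrow> ereal"
    and D :: "'a measure \<Rightarrow> 'a measure \<Rightarrow> ennreal"
    and c :: "'a \<times> 'a \<Rightarrow> ennreal"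
    and \<Theta> :: "'b set"
    and LL :: "'b \<Rightarrow> 'a \<Rightarrow> ereal"
    and \<epsilon> :: real
  assumes "compact (UNIV :: 'a set)"
    and "usc L" and "\<forall>x. L x \<noteq> \<infinity>"
    and "P \<in> Prob"
    and "pre_divergence D"
    and "weak_lsc (\<lambda>Q. D Q P)"
    and "cost_function c"
    and "\<forall>x1 x2. c (x1, x2) = 0 \<longleftrightarrow> x1 = x2"
    and "\<forall>\<theta>\<in>\<Theta>. usc (LL \<theta>) \<and> (\<forall>x. LL \<theta> x \<noteq> \<infinity>)"
    and "\<epsilon> > 0"
  shows "((\<lambda>r::real. SUP Q\<in>{Q \<in> Prob. OT_reg_div D (\<lambda>z. ennreal r * c z) Q P \<le> ennreal \<epsilon>}. expect Q L)
            \<longlongrightarrow> (SUP Q\<in>{Q \<in> Prob. D Q P \<le> ennreal \<epsilon>}. expect Q L)) at_top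
       \<and> ((\<lambda>r::real. INF \<theta>\<in>\<Theta>. SUP Q\<in>{Q \<in> Prob. OT_reg_div D (\<lambda>z. ennreal r * c z) Q P \<le> ennreal \<epsilon>}. expect Q (LL \<theta>))
            \<longlongrightarrow> (INF \<theta>\<in>\<Theta>. SUP Q\<in>{Q \<in> Prob. D Q P \<le> ennreal \<epsilon>}. expect Q (LL \<theta>))) at_top"
proof
  show "((\<lambda>r::real. SUP Q\<in>{Q \<in> Prob. OT_reg_div D (\<lambda>z. ennreal r * c z) Q P \<le> ennreal \<epsilon>}. expect Q L)
            \<longlongrightarrow> (SUP Q\<in>{Q \<in> Prob. D Q P \<le> ennreal \<epsilon>}. expect Q L)) at_top"
    by (rule main_single(2)) (use assms in auto)
next
  define S where "S \<theta> r = (SUP Q\<in>{Q \<in> Prob. OT_reg_div D (\<lambda>z. ennreal r * c z) Q P \<le> ennreal \<epsilon>}. expect Q (LL \<theta>))" for \<theta> r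
  define Si where "Si \<theta> = (SUP Q\<in>{Q \<in> Prob. D Q P \<le> ennreal \<epsilon>}. expect Q (LL \<theta>))" for \<theta>
  have ge: "Si \<theta> \<le> S \<theta> r" if "\<theta> \<in> \<Theta>" for \<theta> r
    unfolding S_def Si_def by (rule main_single(1)) (use assms that in auto)
  have lim: "((\<lambda>r. S \<theta> r) \<longlongrightarrow> Si \<theta>) at_top" if "\<theta> \<in> \<Theta>" for \<theta>
    unfolding S_def Si_def by (rule main_single(2)) (use assms that in auto)
  show "((\<lambda>r. INF \<theta>\<in>\<Theta>. S \<theta> r) \<longlongrightarrow> (INF \<theta>\<in>\<Theta>. Si \<theta>)) at_top"
  proof (rule order_tendstoI)
    fix a assume a: "a < (INF \<theta>\<in>\<Theta>. Si \<theta>)"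
    have "\<forall>r. a < (INF \<theta>\<in>\<Theta>. S \<theta> r)"
    proof
      fix r
      have "(INF \<theta>\<in>\<Theta>. Si \<theta>) \<le> (INF \<theta>\<in>\<Theta>. S \<theta> r)"
        by (rule INF_mono) (use ge in blast)
      then show "a < (INF \<theta>\<in>\<Theta>. S \<theta> r)" using a by simp
    qed
    then show "eventually (\<lambda>r. a < (INF \<theta>\<in>\<Theta>. S \<theta> r)) at_top" by (rule always_eventually)
  next
    fix a assume "(INF \<theta>\<in>\<Theta>. Si \<theta>) < a"
    then obtain \<theta> where \<theta>: "\<theta> \<in> \<Theta>" "Si \<theta> < a" unfolding INF_less_iff by blast
    have "eventually (\<lambda>r. S \<theta> r < a) at_top" by (rule order_tendstoD(2)[OF lim[OF \<theta>(1)] \<theta>(2)])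
    then show "eventually (\<lambda>r. (INF \<theta>\<in>\<Theta>. S \<theta> r) < a) at_top"
    proof (rule eventually_mono)
      fix r assume "S \<theta> r < a"
      then show "(INF \<theta>\<in>\<Theta>. S \<theta> r) < a" using INF_lower[OF \<theta>(1), of "\<lambda>\<theta>. S \<theta> r"] by simp
    qed
  qed
qed

end
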